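(* Let $G,n,T,W$ be as in the context. Then: (1) $W$ is a discrete gradient vector field on $\mathcal D^nG$; (2) $W$ is $\mathcal S_n$-equivariant ($(b,a)\in W$ implies $(b\cdot\sigma,a\cdot\sigma)\in W$ for all $\sigma\in\mathcal S_n$), so it induces a discrete vector field on the quotient $U\mathcal D^nG=\mathcal D^nG/\mathcal S_n$, and if this induced field has $m_k$ critical cells of dimension $k$, then $\mathcal D^nG$ has exactly $n!\,m_k$ critical cells of dimension $k$ with respect to $W$.
   Context: Let $G$ be a finite graph regarded as a 1-dimensional cell complex and $n\ge1$; assume $G$ is $n$-sufficiently subdivided, i.e. every path between distinct vertices of degree $\neq2$ passes through at least $n-1$ edges and every cycle passes through at least $n+1$ edges. The discretized configuration space $\mathcal D^nG$ is the subcomplex of the product cell complex $G^n$ consisting of the cells $a=(a_1,\dots,a_n)$ (each $a_i$ a vertex or an open edge of $G$) whose closures are pairwise disjoint; $\mathcal S_n$ acts on it by permuting coordinates, $(a_1,\dots,a_n)\cdot\sigma=(a_{\sigma(1)},\dots,a_{\sigma(n)})$. Fix a maximal tree $T$ of $G$ and a root vertex $0$ of $T$ of degree one. For vertices $u,v$, let $u\wedge v$ be the vertex $w$ such that the intersection of the $T$-paths from $0$ to $u$ and from $0$ to $v$ is the $T$-path from $0$ to $w$. For each vertex $v\ne0$ number the edges of $G$ incident to $v$ by $0,1,\dots,d(v)-1$, giving number $0$ to the edge lying on the $T$-path from $v$ to $0$; the unique edge at $0$ gets number $1$. For vertices $v\neq w$ let $g(v,w)$ be the number of the edge at $v$ lying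 on the $T$-path from $v$ to $w$. Totally order the vertices: for $u\ne v$ with $w=u\wedge v$, $u<v$ iff either $u=w$, or $u\neq w$ and $g(w,u)<g(w,v)$. For a vertex $v\ne0$, $e(v)$ denotes the edge of $T$ incident to $v$ lying on the $T$-path from $v$ to $0$. For a cell $a$ and a vertex coordinate $a_i$: $a_i$ is blocked in $a$ if $a_i=0$ or the closure of $e(a_i)$ meets the closure of some $a_j$, $j\ne i$; otherwise $a_i$ is unblocked and $\mathrm{er}_i(a)$ is obtained by replacing $a_i$ with $e(a_i)$. If $a_i$ is the smallest unblocked vertex coordinate of $a$, $\mathrm{pr}(a)=\mathrm{er}_i(a)$. Define $W_0=\{(a,\mathrm{pr}(a)) : a$ a $0$-cell with $\mathrm{pr}(a)$ defined$\}$, $W_{k+1}=\{(a,\mathrm{pr}(a)) : a$ a $(k+1)$-cell with $\mathrm{pr}(a)$ defined, not the second entry of a pair in $W_k\}$, $W=\bigcup_kW_k$. A discrete vector field $V$ on a regular cell complex is a set of pairs $(\tau,\nu)$ with $\tau$ an immediate face of $\nu$ such that each cell is an entry of at most one pair; a cell is critical if it is an entry of no pair. A $V$-path is a sequence of $k$-cells $\tau_1,\dots,\tau_r$ with $\tau_i\ne\tau_{i+1}$, each $\tau_i$ ($i<r$) the first entry of a pair $(\tau_i,V(\tau_i))\in V$ and $\tau_{i+1}$ a face of $V(\tau_i)$; it is closed if $\tau_1=\tau_r$; $V$ is a gradient vector field if there are no closed $V$-paths (of length $\geq 2$ with $\tau_1=\tau_r$). *)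

theory Defs
  imports Main "HOL-Combinatorics.Permutations"
begin

definition is_walk :: "'v set \<Rightarrow> ('e \<Rightarrow> 'v set) \<Rightarrow> 'e set \<Rightarrow> 'v list \<Rightarrow> 'e list \<Rightarrow> bool" where
  "is_walk V inc F vs es \<longleftrightarrow> length vs = Suc (length es) \<and> set vs \<subseteq> V \<and>
     (\<forall>i<length es. es ! i \<in> F \<and> inc (es ! i) = {vs ! i, vs ! Suc i})"

definition is_path :: "'v set \<Rightarrow> ('e \<Rightarrow> 'v set) \<Rightarrow> 'e set \<Rightarrow> 'v list \<Rightarrow> 'e list \<Rightarrow> bool" where
  "is_path V inc F vs es \<longleftrightarrow> is_walk V inc F vs es \<and> distinct vs"

definition is_cycle :: "'v set \<Rightarrow> ('e \<Rightarrow> 'v set) \<Rightarrow> 'e set \<Rightarrow> 'v list \<Rightarrow> 'e list \<Rightarrow> bool" where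
  "is_cycle V inc F vs es \<longleftrightarrow> is_walk V inc F vs es \<and> es \<noteq> [] \<and> distinct es \<and>
     hd vs = last vs \<and> distinct (tl vs)"

definition finite_graph :: "'v set \<Rightarrow> 'e set \<Rightarrow> ('e \<Rightarrow> 'v set) \<Rightarrow> bool" where
  "finite_graph V E inc \<longleftrightarrow> finite V \<and> finite E \<and> (\<forall>e\<in>E. inc e \<subseteq> V \<and> card (inc e) = 2)"

definition deg :: "'e set \<Rightarrow> ('e \<Rightarrow> 'v set) \<Rightarrow> 'v \<Rightarrow> nat" where
  "deg E inc v = card {e \<in> E. v \<in> inc e}"

definition sufficiently_subdivided :: "nat \<Rightarrow> 'v set \<Rightarrow> 'e set \<Rightarrow> ('e \<Rightarrow> 'v set) \<Rightarrow> bool" where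
  "sufficiently_subdivided n V E inc \<longleftrightarrow>
     (\<forall>vs es. is_path V inc E vs es \<and> hd vs \<noteq> last vs \<and> deg E inc (hd vs) \<noteq> 2
         \<and> deg E inc (last vs) \<noteq> 2 \<longrightarrow> length es \<ge> n - 1) \<and>
     (\<forall>vs es. is_cycle V inc E vs es \<longrightarrow> length es \<ge> n + 1)"

text \<open>Maximal (= spanning, the graph being connected) tree T: any two vertices
  are joined by a unique simple path in T.\<close>
definition spanning_tree :: "'v set \<Rightarrow> 'e set \<Rightarrow> ('e \<Rightarrow> 'v set) \<Rightarrow> 'e set \<Rightarrow> bool" where
  "spanning_tree V E inc T \<longleftrightarrow> T \<subseteq> E \<and>
     (\<forall>u\<in>V. \<forall>v\<in>V. \<exists>!p. is_path V inc T (fst p) (snd p) \<and> hd (fst p) = u \<and> last (fst p) = v)"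

definition tpath :: "'v set \<Rightarrow> ('e \<Rightarrow> 'v set) \<Rightarrow> 'e set \<Rightarrow> 'v \<Rightarrow> 'v \<Rightarrow> 'v list \<times> 'e list" where
  "tpath V inc T u v = (THE p. is_path V inc T (fst p) (snd p) \<and> hd (fst p) = u \<and> last (fst p) = v)"

text \<open>u \<and> v with respect to the root r.\<close>
definition tmeet :: "'v set \<Rightarrow> ('e \<Rightarrow> 'v set) \<Rightarrow> 'e set \<Rightarrow> 'v \<Rightarrow> 'v \<Rightarrow> 'v \<Rightarrow> 'v" where
  "tmeet V inc T r u v = (THE w. w \<in> V \<and>
      set (fst (tpath V inc T r u)) \<inter> set (fst (tpath V inc T r v)) = set (fst (tpath V inc T r w)) \<and>
      set (snd (tpath V inc T r u)) \<inter> set (snd (tpath V inc T r v)) = set (snd (tpath V inc T r w)))"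

definition gnum :: "'v set \<Rightarrow> ('e \<Rightarrow> 'v set) \<Rightarrow> 'e set \<Rightarrow> ('v \<Rightarrow> 'e \<Rightarrow> nat) \<Rightarrow> 'v \<Rightarrow> 'v \<Rightarrow> nat" where
  "gnum V inc T num v w = num v (hd (snd (tpath V inc T v w)))"

text \<open>e(v): the edge of T at v on the T-path from v to the root.\<close>
definition eroot :: "'v set \<Rightarrow> ('e \<Rightarrow> 'v set) \<Rightarrow> 'e set \<Rightarrow> 'v \<Rightarrow> 'v \<Rightarrow> 'e" where
  "eroot V inc T r v = hd (snd (tpath V inc T v r))"

text \<open>The total order on vertices (strict part).\<close>
definition vless :: "'v set \<Rightarrow> ('e \<Rightarrow> 'v set) \<Rightarrow> 'e set \<Rightarrow> 'v \<Rightarrow> ('v \<Rightarrow> 'e \<Rightarrow> nat) \<Rightarrow> 'v \<Rightarrow> 'v \<Rightarrow> bool" where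
  "vless V inc T r num u v \<longleftrightarrow> u \<noteq> v \<and>
     (let w = tmeet V inc T r u v in
        u = w \<or> (u \<noteq> w \<and> v \<noteq> w \<and> gnum V inc T num w u < gnum V inc T num w v))"

definition edge_numbering :: "'v set \<Rightarrow> 'e set \<Rightarrow> ('e \<Rightarrow> 'v set) \<Rightarrow> 'e set \<Rightarrow> 'v \<Rightarrow> ('v \<Rightarrow> 'e \<Rightarrow> nat) \<Rightarrow> bool" where
  "edge_numbering V E inc T r num \<longleftrightarrow>
     (\<forall>v\<in>V. v \<noteq> r \<longrightarrow> bij_betw (num v) {e \<in> E. v \<in> inc e} {0..<deg E inc v}
                     \<and> num v (eroot V inc T r v) = 0) \<and>
     (\<forall>e\<in>T. r \<in> inc e \<longrightarrow> num r e = 1)"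

datatype ('v, 'e) gcell = Vx 'v | Ed 'e

fun gcell_in :: "'v set \<Rightarrow> 'e set \<Rightarrow> ('v, 'e) gcell \<Rightarrow> bool" where
  "gcell_in V E (Vx v) = (v \<in> V)"
| "gcell_in V E (Ed e) = (e \<in> E)"

text \<open>Vertex set of the closure of a cell of G (two closures meet iff these meet).\<close>
fun cverts :: "('e \<Rightarrow> 'v set) \<Rightarrow> ('v, 'e) gcell \<Rightarrow> 'v set" where
  "cverts inc (Vx v) = {v}"
| "cverts inc (Ed e) = inc e"

fun is_Ed :: "('v, 'e) gcell \<Rightarrow> bool" where
  "is_Ed (Vx v) = False"
| "is_Ed (Ed e) = True"

fun the_Vx :: "('v, 'e) gcell \<Rightarrow> 'v" where
  "the_Vx (Vx v) = v"
| "the_Vx (Ed e) = undefined"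

definition DnG :: "nat \<Rightarrow> 'v set \<Rightarrow> 'e set \<Rightarrow> ('e \<Rightarrow> 'v set) \<Rightarrow> ('v, 'e) gcell list set" where
  "DnG n V E inc = {a. length a = n \<and> (\<forall>i<n. gcell_in V E (a ! i)) \<and>
      (\<forall>i<n. \<forall>j<n. i \<noteq> j \<longrightarrow> cverts inc (a ! i) \<inter> cverts inc (a ! j) = {})}"

definition cdim :: "('v, 'e) gcell list \<Rightarrow> nat" where
  "cdim a = length (filter is_Ed a)"

definition imm_face :: "('e \<Rightarrow> 'v set) \<Rightarrow> ('v, 'e) gcell list \<Rightarrow> ('v, 'e) gcell list \<Rightarrow> bool" where
  "imm_face inc a b \<longleftrightarrow> (\<exists>i<length b. \<exists>e v. b ! i = Ed e \<and> v \<in> inc e \<and> a = b[i := Vx v])"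

definition act :: "('v, 'e) gcell list \<Rightarrow> (nat \<Rightarrow> nat) \<Rightarrow> ('v, 'e) gcell list" where
  "act a \<sigma> = map (\<lambda>i. a ! \<sigma> i) [0..<length a]"

definition blocked :: "'v set \<Rightarrow> ('e \<Rightarrow> 'v set) \<Rightarrow> 'e set \<Rightarrow> 'v \<Rightarrow> ('v, 'e) gcell list \<Rightarrow> nat \<Rightarrow> bool" where
  "blocked V inc T r a i \<longleftrightarrow> the_Vx (a ! i) = r \<or>
     (\<exists>j<length a. j \<noteq> i \<and> inc (eroot V inc T r (the_Vx (a ! i))) \<inter> cverts inc (a ! j) \<noteq> {})"

definition unblocked :: "'v set \<Rightarrow> ('e \<Rightarrow> 'v set) \<Rightarrow> 'e set \<Rightarrow> 'v \<Rightarrow> ('v, 'e) gcell list \<Rightarrow> nat \<Rightarrow> bool" where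
  "unblocked V inc T r a i \<longleftrightarrow> i < length a \<and> \<not> is_Ed (a ! i) \<and> \<not> blocked V inc T r a i"

definition er :: "'v set \<Rightarrow> ('e \<Rightarrow> 'v set) \<Rightarrow> 'e set \<Rightarrow> 'v \<Rightarrow> ('v, 'e) gcell list \<Rightarrow> nat \<Rightarrow> ('v, 'e) gcell list" where
  "er V inc T r a i = a[i := Ed (eroot V inc T r (the_Vx (a ! i)))]"

definition pr :: "'v set \<Rightarrow> ('e \<Rightarrow> 'v set) \<Rightarrow> 'e set \<Rightarrow> 'v \<Rightarrow> ('v \<Rightarrow> 'e \<Rightarrow> nat) \<Rightarrow>
    ('v, 'e) gcell list \<Rightarrow> ('v, 'e) gcell list option" where
  "pr V inc T r num a =
     (if \<exists>i. unblocked V inc T r a i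
      then Some (er V inc T r a (THE i. unblocked V inc T r a i \<and>
               (\<forall>j. unblocked V inc T r a j \<and> j \<noteq> i \<longrightarrow>
                    vless V inc T r num (the_Vx (a ! i)) (the_Vx (a ! j)))))
      else None)"

fun Wk :: "nat \<Rightarrow> 'v set \<Rightarrow> 'e set \<Rightarrow> ('e \<Rightarrow> 'v set) \<Rightarrow> 'e set \<Rightarrow> 'v \<Rightarrow> ('v \<Rightarrow> 'e \<Rightarrow> nat) \<Rightarrow> nat \<Rightarrow>
    (('v, 'e) gcell list \<times> ('v, 'e) gcell list) set" where
  "Wk n V E inc T r num 0 =
     {(a, the (pr V inc T r num a)) | a. a \<in> DnG n V E inc \<and> cdim a = 0 \<and> pr V inc T r num a \<noteq> None}"
| "Wk n V E inc T r num (Suc k) =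
     {(a, the (pr V inc T r num a)) | a. a \<in> DnG n V E inc \<and> cdim a = Suc k \<and>
        pr V inc T r num a \<noteq> None \<and> a \<notin> snd ` Wk n V E inc T r num k}"

definition W :: "nat \<Rightarrow> 'v set \<Rightarrow> 'e set \<Rightarrow> ('e \<Rightarrow> 'v set) \<Rightarrow> 'e set \<Rightarrow> 'v \<Rightarrow> ('v \<Rightarrow> 'e \<Rightarrow> nat) \<Rightarrow>
    (('v, 'e) gcell list \<times> ('v, 'e) gcell list) set" where
  "W n V E inc T r num = (\<Union>k. Wk n V E inc T r num k)"

definition discrete_vector_field :: "'c set \<Rightarrow> ('c \<Rightarrow> 'c \<Rightarrow> bool) \<Rightarrow> ('c \<times> 'c) set \<Rightarrow> bool" where
  "discrete_vector_field X face Vf \<longleftrightarrow>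
     (\<forall>(\<tau>, \<nu>) \<in> Vf. \<tau> \<in> X \<and> \<nu> \<in> X \<and> face \<tau> \<nu>) \<and>
     (\<forall>p\<in>Vf. \<forall>q\<in>Vf. p \<noteq> q \<longrightarrow> {fst p, snd p} \<inter> {fst q, snd q} = {})"

definition V_path :: "('c \<Rightarrow> 'c \<Rightarrow> bool) \<Rightarrow> ('c \<times> 'c) set \<Rightarrow> 'c list \<Rightarrow> bool" where
  "V_path face Vf ts \<longleftrightarrow> ts \<noteq> [] \<and>
     (\<forall>i. Suc i < length ts \<longrightarrow> ts ! i \<noteq> ts ! Suc i \<and>
        (\<exists>\<nu>. (ts ! i, \<nu>) \<in> Vf \<and> face (ts ! Suc i) \<nu>))"

definition gradient_vector_field :: "'c set \<Rightarrow> ('c \<Rightarrow> 'c \<Rightarrow> bool) \<Rightarrow> ('c \<times> 'c) set \<Rightarrow> bool" where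
  "gradient_vector_field X face Vf \<longleftrightarrow> discrete_vector_field X face Vf \<and>
     \<not> (\<exists>ts. V_path face Vf ts \<and> length ts \<ge> 2 \<and> hd ts = last ts)"

definition critical :: "('c \<times> 'c) set \<Rightarrow> 'c \<Rightarrow> bool" where
  "critical Vf c \<longleftrightarrow> c \<notin> fst ` Vf \<and> c \<notin> snd ` Vf"

definition orbit :: "nat \<Rightarrow> ('v, 'e) gcell list \<Rightarrow> ('v, 'e) gcell list set" where
  "orbit n a = {act a \<sigma> | \<sigma>. \<sigma> permutes {..<n}}"

definition UDnG :: "nat \<Rightarrow> 'v set \<Rightarrow> 'e set \<Rightarrow> ('e \<Rightarrow> 'v set) \<Rightarrow> ('v, 'e) gcell list set set" where
  "UDnG n V E inc = orbit n ` DnG n V E inc"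

definition qface :: "('e \<Rightarrow> 'v set) \<Rightarrow> ('v, 'e) gcell list set \<Rightarrow> ('v, 'e) gcell list set \<Rightarrow> bool" where
  "qface inc O1 O2 \<longleftrightarrow> (\<exists>\<tau>\<in>O1. \<exists>\<nu>\<in>O2. imm_face inc \<tau> \<nu>)"

definition induced_field :: "nat \<Rightarrow> (('v, 'e) gcell list \<times> ('v, 'e) gcell list) set \<Rightarrow>
    (('v, 'e) gcell list set \<times> ('v, 'e) gcell list set) set" where
  "induced_field n Vf = {(orbit n b, orbit n a) | b a. (b, a) \<in> Vf}"

end

theory Submission
  imports Defs "HOL-Combinatorics.Permutations"
begin

lemma walk_take:
  assumes "is_walk V inc F vs es" "k \<le> length es"
  shows "is_walk V inc F (take (Suc k) vs) (take k es)"
  using assms unfolding is_walk_def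
  by (auto simp: min_def dest: in_set_takeD)

lemma walk_drop:
  assumes "is_walk V inc F vs es" "k \<le> length es"
  shows "is_walk V inc F (drop k vs) (drop k es)"
  using assms unfolding is_walk_def
  by (auto dest: in_set_dropD)

lemma walk_snoc:
  assumes "is_walk V inc F vs es" "x \<in> V" "e \<in> F" "inc e = {last vs, x}"
  shows "is_walk V inc F (vs @ [x]) (es @ [e])"
proof -
  have L: "length vs = Suc (length es)" "vs \<noteq> []" using assms(1) unfolding is_walk_def by auto
  then have lv: "last vs = vs ! length es" by (simp add: last_conv_nth)
  have "\<forall>i<length (es @ [e]). (es @ [e]) ! i \<in> F \<and> inc ((es @ [e]) ! i) = {(vs @ [x]) ! i, (vs @ [x]) ! Suc i}"
  proof (intro allI impI)
    fix i assume i: "i < length (es @ [e])"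
    show "(es @ [e]) ! i \<in> F \<and> inc ((es @ [e]) ! i) = {(vs @ [x]) ! i, (vs @ [x]) ! Suc i}"
    proof (cases "i < length es")
      case True then show ?thesis using assms(1) L unfolding is_walk_def by (auto simp: nth_append)
    next
      case False then have "i = length es" using i by simp
      then show ?thesis using assms L lv by (auto simp: nth_append)
    qed
  qed
  then show ?thesis using assms L unfolding is_walk_def by auto
qed

lemma walk_rev:
  assumes "is_walk V inc F vs es"
  shows "is_walk V inc F (rev vs) (rev es)"
  using assms unfolding is_walk_def
  apply (auto simp: rev_nth)
  subgoal for i
    apply (drule spec[of _ "length es - Suc i"])
    apply (auto simp: insert_commute Suc_diff_Suc)
    done
  subgoal for i
    apply (drule spec[of _ "length es - Suc i"])
    apply (auto simp: insert_commute Suc_diff_Suc)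
    done
  done

lemma path_take: "is_path V inc F vs es \<Longrightarrow> k \<le> length es \<Longrightarrow> is_path V inc F (take (Suc k) vs) (take k es)"
  unfolding is_path_def using walk_take by auto
lemma path_drop: "is_path V inc F vs es \<Longrightarrow> k \<le> length es \<Longrightarrow> is_path V inc F (drop k vs) (drop k es)"
  unfolding is_path_def using walk_drop by auto
lemma path_rev: "is_path V inc F vs es \<Longrightarrow> is_path V inc F (rev vs) (rev es)"
  unfolding is_path_def using walk_rev by auto
lemma path_snoc: "is_path V inc F vs es \<Longrightarrow> x \<in> V \<Longrightarrow> e \<in> F \<Longrightarrow> inc e = {last vs, x} \<Longrightarrow> x \<notin> set vs
  \<Longrightarrow> is_path V inc F (vs @ [x]) (es @ [e])"
  unfolding is_path_def using walk_snoc by auto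

lemma walk_len: "is_walk V inc F vs es \<Longrightarrow> length vs = Suc (length es)"
  unfolding is_walk_def by auto
lemma walk_nonempty: "is_walk V inc F vs es \<Longrightarrow> vs \<noteq> []"
  unfolding is_walk_def by auto
lemma walk_set: "is_walk V inc F vs es \<Longrightarrow> set vs \<subseteq> V"
  unfolding is_walk_def by auto
lemma walk_edge: "is_walk V inc F vs es \<Longrightarrow> i < length es \<Longrightarrow> es ! i \<in> F \<and> inc (es ! i) = {vs ! i, vs ! Suc i}"
  unfolding is_walk_def by auto

locale gs =
  fixes V :: "'v set" and E :: "'e set" and inc :: "'e \<Rightarrow> 'v set" and T :: "'e set"
    and r :: 'v and num :: "'v \<Rightarrow> 'e \<Rightarrow> nat"
  assumes graph: "finite_graph V E inc" and tree: "spanning_tree V E inc T"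
    and rootV: "r \<in> V" and root1: "card {e \<in> T. r \<in> inc e} = 1"
    and numbering: "edge_numbering V E inc T r num"
begin

abbreviation "tp \<equiv> tpath V inc T"
abbreviation "isp \<equiv> is_path V inc T"

lemma TE: "T \<subseteq> E" using tree unfolding spanning_tree_def by auto
lemma inc2: "e \<in> E \<Longrightarrow> inc e \<subseteq> V \<and> card (inc e) = 2" using graph unfolding finite_graph_def by auto
lemma finV: "finite V" and finE: "finite E" using graph unfolding finite_graph_def by auto

lemma tpath_spec:
  assumes "u \<in> V" "v \<in> V"
  shows "isp (fst (tp u v)) (snd (tp u v)) \<and> hd (fst (tp u v)) = u \<and> last (fst (tp u v)) = v"
proof -
  have "\<exists>!p. isp (fst p) (snd p) \<and> hd (fst p) = u \<and> last (fst p) = v"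
    using tree assms unfolding spanning_tree_def by auto
  then show ?thesis unfolding tpath_def by (rule theI')
qed

lemma tpath_eq:
  assumes "isp vs es" "hd vs = u" "last vs = v"
  shows "tp u v = (vs, es)"
proof -
  have ne: "vs \<noteq> []" using assms(1) unfolding is_path_def by (metis walk_nonempty)
  have "set vs \<subseteq> V" using assms(1) unfolding is_path_def by (metis walk_set)
  then have uv: "u \<in> V" "v \<in> V" using assms ne by auto
  have "\<exists>!p. isp (fst p) (snd p) \<and> hd (fst p) = u \<and> last (fst p) = v"
    using tree uv unfolding spanning_tree_def by auto
  then show ?thesis unfolding tpath_def
    by (rule the1_equality) (use assms in auto)
qed

definition "rvs u = fst (tp r u)"
definition "res u = snd (tp r u)"
definition "depth u = length (res u)"

lemma rp:
  assumes "u \<in> V"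
  shows "isp (rvs u) (res u)" "hd (rvs u) = r" "last (rvs u) = u" "length (rvs u) = Suc (depth u)"
    "rvs u ! depth u = u" "rvs u ! 0 = r"
proof -
  show 1: "isp (rvs u) (res u)" "hd (rvs u) = r" "last (rvs u) = u"
    using tpath_spec[OF rootV assms] unfolding rvs_def res_def by auto
  show 2: "length (rvs u) = Suc (depth u)" using 1 unfolding depth_def is_path_def by (metis walk_len)
  then show "rvs u ! depth u = u" using 1 by (metis diff_Suc_1 last_conv_nth list.size(3) nat.distinct(1))
  show "rvs u ! 0 = r" using 1 2 by (metis hd_conv_nth list.size(3) nat.distinct(1))
qed

lemma rp_set: "u \<in> V \<Longrightarrow> set (rvs u) \<subseteq> V"
  using rp(1) unfolding is_path_def by (metis walk_set)

lemma rp_distinct: "u \<in> V \<Longrightarrow> distinct (rvs u)"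
  using rp(1) unfolding is_path_def by auto

lemma rp_edge: "u \<in> V \<Longrightarrow> i < depth u \<Longrightarrow> res u ! i \<in> T \<and> inc (res u ! i) = {rvs u ! i, rvs u ! Suc i}"
  using rp(1) unfolding is_path_def depth_def by (metis walk_edge)

lemma rp_take:
  assumes "u \<in> V" "k \<le> depth u"
  shows "tp r (rvs u ! k) = (take (Suc k) (rvs u), take k (res u))"
proof -
  have p: "isp (take (Suc k) (rvs u)) (take k (res u))"
    using path_take[OF rp(1)[OF assms(1)]] assms(2) unfolding depth_def by auto
  have "hd (take (Suc k) (rvs u)) = r" using rp[OF assms(1)] by simp
  moreover have "last (take (Suc k) (rvs u)) = rvs u ! k"
    using rp(4)[OF assms(1)] assms(2) by (simp add: take_Suc_conv_app_nth)
  ultimately show ?thesis using tpath_eq[OF p] by auto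
qed

lemma rp_take':
  assumes "u \<in> V" "k \<le> depth u"
  shows "rvs (rvs u ! k) = take (Suc k) (rvs u)" "res (rvs u ! k) = take k (res u)"
    "depth (rvs u ! k) = k" "rvs u ! k \<in> V"
proof -
  show 1: "rvs (rvs u ! k) = take (Suc k) (rvs u)" "res (rvs u ! k) = take k (res u)"
    using rp_take[OF assms] unfolding rvs_def res_def by auto
  show "depth (rvs u ! k) = k" using 1 assms unfolding depth_def by simp
  have "k < length (rvs u)" using rp(4)[OF assms(1)] assms(2) by simp
  then show "rvs u ! k \<in> V" using rp_set[OF assms(1)] nth_mem by blast
qed

lemma rp_drop:
  assumes "u \<in> V" "k \<le> depth u"
  shows "tp (rvs u ! k) u = (drop k (rvs u), drop k (res u))"
proof -
  have p: "isp (drop k (rvs u)) (drop k (res u))"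
    using path_drop[OF rp(1)[OF assms(1)]] assms(2) unfolding depth_def by auto
  have "hd (drop k (rvs u)) = rvs u ! k" using rp(4)[OF assms(1)] assms(2)
    by (simp add: hd_drop_conv_nth)
  moreover have "last (drop k (rvs u)) = u"
    using rp(3,4)[OF assms(1)] assms(2) by simp
  ultimately show ?thesis using tpath_eq[OF p] by auto
qed

lemma rp_up:
  assumes "u \<in> V"
  shows "tp u r = (rev (rvs u), rev (res u))"
proof -
  have p: "isp (rev (rvs u)) (rev (res u))" using path_rev[OF rp(1)[OF assms]] .
  have "rvs u \<noteq> []" using rp(4)[OF assms] by auto
  then show ?thesis using tpath_eq[OF p] rp[OF assms] by (simp add: hd_rev last_rev)
qed

lemma depth0: "u \<in> V \<Longrightarrow> depth u = 0 \<longleftrightarrow> u = r"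
  using rp(5,6) by (metis rp(4) rootV rp_take'(3) le0)

lemma eroot_last:
  assumes "u \<in> V" "u \<noteq> r"
  shows "eroot V inc T r u = res u ! (depth u - 1)"
proof -
  have "depth u > 0" using depth0 assms by auto
  then show ?thesis using rp_up[OF assms(1)] unfolding eroot_def depth_def
    by (simp add: hd_rev last_conv_nth)
qed

definition "parent u = rvs u ! (depth u - 1)"

lemma eroot_props:
  assumes "u \<in> V" "u \<noteq> r"
  shows "eroot V inc T r u \<in> T" "inc (eroot V inc T r u) = {parent u, u}" "parent u \<in> V"
    "depth (parent u) = depth u - 1" "depth u = Suc (depth (parent u))" "parent u \<noteq> u"
proof -
  have d: "depth u > 0" using depth0 assms by auto
  have "res u ! (depth u - 1) \<in> T \<and> inc (res u ! (depth u - 1)) = {rvs u ! (depth u - 1), rvs u ! Suc (depth u - 1)}"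
    using rp_edge[OF assms(1)] d by auto
  then show "eroot V inc T r u \<in> T" "inc (eroot V inc T r u) = {parent u, u}"
    using eroot_last[OF assms] rp(5)[OF assms(1)] d unfolding parent_def by auto
  show "parent u \<in> V" "depth (parent u) = depth u - 1" unfolding parent_def using rp_take'[OF assms(1)] by auto
  then show "depth u = Suc (depth (parent u))" "parent u \<noteq> u" using d by auto
qed

lemma eroot_inc: "u \<in> V \<Longrightarrow> u \<noteq> r \<Longrightarrow> u \<in> inc (eroot V inc T r u)"
  using eroot_props(2) by auto

lemma tree_edge:
  assumes "e \<in> T" "x \<in> inc e"
  obtains y where "inc e = {x, y}" "x \<noteq> y" "x \<in> V" "y \<in> V"
    "(depth x = Suc (depth y) \<and> x \<noteq> r \<and> eroot V inc T r x = e) \<or> (depth y = Suc (depth x) \<and> y \<noteq> r \<and> eroot V inc T r y = e)"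
proof -
  have c: "inc e \<subseteq> V" "card (inc e) = 2" using inc2 assms TE by auto
  then obtain y where y: "inc e = {x, y}" "x \<noteq> y"
    using assms(2) by (metis card_2_iff insert_commute insertE singletonD)
  have xy: "x \<in> V" "y \<in> V" using c y by auto
  have "(depth x = Suc (depth y) \<and> x \<noteq> r \<and> eroot V inc T r x = e) \<or> (depth y = Suc (depth x) \<and> y \<noteq> r \<and> eroot V inc T r y = e)"
    if sym: "\<And>a b. inc e = {a, b} \<Longrightarrow> a \<noteq> b \<Longrightarrow> a \<in> V \<Longrightarrow> b \<in> V \<Longrightarrow> a \<notin> set (rvs b) \<Longrightarrow>
       depth a = Suc (depth b) \<and> a \<noteq> r \<and> eroot V inc T r a = e"
  proof (cases "x \<in> set (rvs y)")
    case False then show ?thesis using sym[OF y xy] by auto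
  next
    case True
    show ?thesis
    proof (cases "y \<in> set (rvs x)")
      case False then show ?thesis using sym[of y x] y xy by (auto simp: insert_commute)
    next
      case True2: True
      obtain k where k: "k < length (rvs y)" "rvs y ! k = x" using True by (metis in_set_conv_nth)
      obtain l where l: "l < length (rvs x)" "rvs x ! l = y" using True2 by (metis in_set_conv_nth)
      have "depth x = k" using rp_take'(3)[OF xy(2), of k] k rp(4)[OF xy(2)] by auto
      moreover have "depth y = l" using rp_take'(3)[OF xy(1), of l] l rp(4)[OF xy(1)] by auto
      moreover have "k \<le> depth y" "l \<le> depth x" using k l rp(4) xy by auto
      moreover have "k \<noteq> depth y" using k rp(5)[OF xy(2)] y by auto
      ultimately show ?thesis by auto
    qed
  qed
  moreover have "depth a = Suc (depth b) \<and> a \<noteq> r \<and> eroot V inc T r a = e"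
    if ab: "inc e = {a, b}" "a \<noteq> b" "a \<in> V" "b \<in> V" "a \<notin> set (rvs b)" for a b
  proof -
    have p: "isp (rvs b @ [a]) (res b @ [e])"
      using path_snoc[OF rp(1)[OF ab(4)] ab(3) assms(1)] ab rp(3)[OF ab(4)] by (auto simp: insert_commute)
    have "hd (rvs b @ [a]) = r" using rp[OF ab(4)] by (cases "rvs b") auto
    then have t: "tp r a = (rvs b @ [a], res b @ [e])" using tpath_eq[OF p] by simp
    then have d: "depth a = Suc (depth b)" unfolding depth_def res_def by simp
    then have "a \<noteq> r" using depth0[OF rootV] by auto
    moreover have "eroot V inc T r a = e" using eroot_last[OF ab(3) \<open>a \<noteq> r\<close>] t d
      unfolding res_def depth_def by (simp add: nth_append)
    ultimately show ?thesis using d by auto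
  qed
  ultimately show ?thesis using that y xy by blast
qed

lemma eroot_inj:
  assumes "u \<in> V" "u \<noteq> r" "w \<in> V" "w \<noteq> r" "eroot V inc T r u = eroot V inc T r w"
  shows "u = w"
proof (rule ccontr)
  assume "u \<noteq> w"
  have "inc (eroot V inc T r u) = {parent u, u}" "inc (eroot V inc T r w) = {parent w, w}"
    using eroot_props(2)[OF assms(1,2)] eroot_props(2)[OF assms(3,4)] by auto
  then have "{parent u, u} = {parent w, w}" using assms(5) by simp
  then have "parent u = w" "parent w = u" using \<open>u \<noteq> w\<close> by (metis doubleton_eq_iff)+
  then show False using eroot_props(5)[OF assms(1,2)] eroot_props(5)[OF assms(3,4)] by simp
qed

lemma common_idx:
  assumes "u \<in> V" "v \<in> V" "a \<le> depth u" "b \<le> depth v" "rvs u ! a = rvs v ! b"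
  shows "a = b" "take (Suc a) (rvs u) = take (Suc a) (rvs v)" "take a (res u) = take a (res v)"
proof -
  have "depth (rvs u ! a) = a" "depth (rvs v ! b) = b" using rp_take'(3)[OF assms(1,3)] rp_take'(3)[OF assms(2,4)] by auto
  then show ab: "a = b" using assms(5) by simp
  show "take (Suc a) (rvs u) = take (Suc a) (rvs v)" "take a (res u) = take a (res v)"
    using rp_take'(1,2)[OF assms(1,3)] rp_take'(1,2)[OF assms(2,4)] assms(5) ab by auto
qed

lemma rvs_determines:
  assumes "w \<in> V" "w' \<in> V" "set (rvs w') = set (rvs w)"
  shows "w' = w"
proof -
  have "w' \<in> set (rvs w)" using assms rp(3)[OF assms(2)] rp(4)[OF assms(2)]
    by (metis last_in_set list.size(3) nat.distinct(1))
  then obtain a where a: "a < length (rvs w)" "rvs w ! a = w'" by (metis in_set_conv_nth)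
  have ad: "a \<le> depth w" using a rp(4)[OF assms(1)] by simp
  have "rvs w' = take (Suc a) (rvs w)" using rp_take'(1)[OF assms(1) ad] a by simp
  then have "length (rvs w') = length (rvs w)"
    using assms(3) rp_distinct[OF assms(1)] rp_distinct[OF assms(2)] by (metis distinct_card)
  then have "a = depth w" using \<open>rvs w' = take (Suc a) (rvs w)\<close> rp(4)[OF assms(1)] ad by simp
  then show ?thesis using a rp(5)[OF assms(1)] by simp
qed

definition "key u = map (\<lambda>k. num (rvs u ! k) (res u ! k)) [0..<depth u]"

lemma length_res: "u \<in> V \<Longrightarrow> length (res u) = depth u" unfolding depth_def by simp

lemma vless_key_aux:
  assumes "u \<in> V" "v \<in> V"
  shows "(vless V inc T r num u v \<longleftrightarrow> (key u, key v) \<in> lexord less_than) \<and> (u \<noteq> v \<longrightarrow> key u \<noteq> key v)"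
proof (cases "u = v")
  case True then show ?thesis unfolding vless_def by (simp add: lexord_irreflexive)
next
  case uv: False
  let ?A = "rvs u" and ?B = "rvs v"
  define P where "P k \<longleftrightarrow> k \<le> min (depth u) (depth v) \<and> ?A ! k = ?B ! k" for k
  have P0: "P 0" unfolding P_def using rp(6) assms by auto
  define k where "k = (GREATEST k. P k)"
  have Pk: "P k" unfolding k_def by (rule GreatestI_nat[where P=P and k=0 and b="depth u"]) (use P0 in \<open>auto simp: P_def\<close>)
  have kmax: "\<And>a. P a \<Longrightarrow> a \<le> k" unfolding k_def by (rule Greatest_le_nat[where b="depth u"]) (auto simp: P_def)
  have kle: "k \<le> depth u" "k \<le> depth v" and Akk: "?A ! k = ?B ! k" using Pk unfolding P_def by auto
  note ci = common_idx[OF assms kle Akk]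
  define w where "w = ?A ! k"
  have wV: "w \<in> V" unfolding w_def using rp_take'(4)[OF assms(1) kle(1)] .
  have rw: "rvs w = take (Suc k) ?A" "res w = take k (res u)" "depth w = k"
    unfolding w_def using rp_take'[OF assms(1) kle(1)] by auto
  have lenA: "length ?A = Suc (depth u)" "length ?B = Suc (depth v)" using rp(4) assms by auto
  have cv: "a \<le> k" if "a \<le> depth u" "b \<le> depth v" "?A ! a = ?B ! b" for a b
  proof -
    have "a = b" using common_idx[OF assms that] by simp
    then show ?thesis using kmax[of a] that unfolding P_def by auto
  qed
  have agree: "?A ! a = ?B ! a" if "a \<le> k" for a
    using ci(2) that by (metis le_imp_less_Suc nth_take)
  have Vset: "set ?A \<inter> set ?B = set (rvs w)"
  proof
    show "set ?A \<inter> set ?B \<subseteq> set (rvs w)"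
    proof
      fix x assume "x \<in> set ?A \<inter> set ?B"
      then obtain a b where "a < length ?A" "?A ! a = x" "b < length ?B" "?B ! b = x"
        by (metis IntE in_set_conv_nth)
      then have "a \<le> k" "a < length ?A" "?A ! a = x" using cv[of a b] lenA by auto
      then have "a < length (take (Suc k) ?A)" "take (Suc k) ?A ! a = x" by auto
      then show "x \<in> set (rvs w)" unfolding rw by (metis nth_mem)
    qed
    show "set (rvs w) \<subseteq> set ?A \<inter> set ?B"
      unfolding rw using ci(2) by (metis Int_greatest set_take_subset)
  qed
  have Eset: "set (res u) \<inter> set (res v) = set (res w)"
  proof
    show "set (res u) \<inter> set (res v) \<subseteq> set (res w)"
    proof
      fix e assume "e \<in> set (res u) \<inter> set (res v)"
      then obtain a b where ab: "a < depth u" "res u ! a = e" "b < depth v" "res v ! b = e"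
        using length_res assms by (metis IntE in_set_conv_nth)
      have ea: "inc e = {?A ! a, ?A ! Suc a}" "inc e = {?B ! b, ?B ! Suc b}"
        using rp_edge[OF assms(1) ab(1)] rp_edge[OF assms(2) ab(3)] ab by auto
      have dA: "?A ! a \<noteq> ?A ! Suc a" using rp_distinct[OF assms(1)] lenA ab
        by (simp add: nth_eq_iff_index_eq)
      have i1: "a = b \<or> a = Suc b"
      proof -
        have "?A ! a = ?B ! b \<or> ?A ! a = ?B ! Suc b" using ea by auto
        then show ?thesis
        proof
          assume h: "?A ! a = ?B ! b" then show ?thesis using common_idx(1)[OF assms _ _ h] ab by simp
        next
          assume h: "?A ! a = ?B ! Suc b" then show ?thesis using common_idx(1)[OF assms _ _ h] ab by simp
        qed
      qed
      have i2: "Suc a = b \<or> Suc a = Suc b"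
      proof -
        have "?A ! Suc a = ?B ! b \<or> ?A ! Suc a = ?B ! Suc b" using ea by auto
        then show ?thesis
        proof
          assume h: "?A ! Suc a = ?B ! b" then show ?thesis using common_idx(1)[OF assms _ _ h] ab by simp
        next
          assume h: "?A ! Suc a = ?B ! Suc b" then show ?thesis using common_idx(1)[OF assms _ _ h] ab by simp
        qed
      qed
      have "a = b" using i1 i2 by auto
      have "{?A ! a, ?A ! Suc a} = {?B ! a, ?B ! Suc a}" using ea \<open>a = b\<close> by simp
      then have "(?A ! a = ?B ! a \<and> ?A ! Suc a = ?B ! Suc a) \<or> (?A ! a = ?B ! Suc a \<and> ?A ! Suc a = ?B ! a)"
        by (simp add: doubleton_eq_iff)
      moreover have "?A ! a \<noteq> ?B ! Suc a"
      proof
        assume "?A ! a = ?B ! Suc a"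
        then have "a = Suc a" using common_idx(1)[OF assms, of a "Suc a"] ab \<open>a = b\<close> by simp
        then show False by simp
      qed
      ultimately have "?A ! Suc a = ?B ! Suc a" by blast
      then have "Suc a \<le> k" using cv[of "Suc a" "Suc a"] ab \<open>a = b\<close> by auto
      then have "a < length (take k (res u))" "take k (res u) ! a = e" using ab length_res[OF assms(1)] by auto
      then show "e \<in> set (res w)" unfolding rw by (metis nth_mem)
    qed
    show "set (res w) \<subseteq> set (res u) \<inter> set (res v)"
      unfolding rw using ci(3) by (metis Int_greatest set_take_subset)
  qed
  have tm: "tmeet V inc T r u v = w"
    unfolding tmeet_def
  proof (rule the1_equality)
    show "w \<in> V \<and> set (fst (tp r u)) \<inter> set (fst (tp r v)) = set (fst (tp r w)) \<and>
      set (snd (tp r u)) \<inter> set (snd (tp r v)) = set (snd (tp r w))"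
      using wV Vset Eset unfolding rvs_def res_def by simp
    then show "\<exists>!w. w \<in> V \<and> set (fst (tp r u)) \<inter> set (fst (tp r v)) = set (fst (tp r w)) \<and>
      set (snd (tp r u)) \<inter> set (snd (tp r v)) = set (snd (tp r w))"
    proof (rule ex1I[of _ w])
      fix w' assume "w' \<in> V \<and> set (fst (tp r u)) \<inter> set (fst (tp r v)) = set (fst (tp r w')) \<and>
        set (snd (tp r u)) \<inter> set (snd (tp r v)) = set (snd (tp r w'))"
      then have "w' \<in> V" "set (rvs w') = set (rvs w)" using Vset unfolding rvs_def by auto
      then show "w' = w" using rvs_determines[OF wV] by blast
    qed
  qed
  have keyi: "key x ! i = num (rvs x ! i) (res x ! i)" "length (key x) = depth x" if "i < depth x" for x i
    unfolding key_def using that by auto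
  have keyagree: "key u ! i = key v ! i" if "i < k" for i
  proof -
    have "res u ! i = res v ! i" using ci(3) that by (metis nth_take)
    then show ?thesis using keyi[of i u] keyi[of i v] agree[of i] that kle by simp
  qed
  have lk: "length (key u) = depth u" "length (key v) = depth v" unfolding key_def by auto
  have takek: "take k (key u) = take k (key v)"
    using keyagree lk kle by (intro nth_equalityI) auto
  have gn: "gnum V inc T num w x = num w (res x ! k)" if "x \<in> V" "k < depth x" "rvs x ! k = w" for x
  proof -
    have "tp w x = (drop k (rvs x), drop k (res x))" using rp_drop[OF that(1)] that by auto
    then show ?thesis unfolding gnum_def using that length_res[OF that(1)] by (simp add: hd_drop_conv_nth)
  qed
  consider (a) "k = depth u" | (b) "k < depth u" "k = depth v" | (c) "k < depth u" "k < depth v"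
    using kle by linarith
  then show ?thesis
  proof cases
    case a
    have "u = w" unfolding w_def a using rp(5)[OF assms(1)] by simp
    have "depth u \<noteq> depth v"
    proof
      assume "depth u = depth v"
      then have "u = v" using rp(5)[OF assms(1)] rp(5)[OF assms(2)] Akk a by simp
      then show False using uv by simp
    qed
    then have "depth u < depth v" using a kle by simp
    then have "(key u, key v) \<in> lexord less_than"
      unfolding lexord_take_index_conv using takek lk a by simp
    moreover have "key u \<noteq> key v" using lk \<open>depth u < depth v\<close> by auto
    ultimately show ?thesis using \<open>u = w\<close> tm uv unfolding vless_def by (simp add: Let_def)
  next
    case b
    have "v = w" unfolding w_def using Akk b rp(5)[OF assms(2)] by simp
    have "u \<noteq> w" using uv \<open>v = w\<close> by simp
    have "(key u, key v) \<notin> lexord less_than"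
      unfolding lexord_take_index_conv using lk b keyagree by auto
    moreover have "key u \<noteq> key v" using lk b by auto
    ultimately show ?thesis using \<open>v = w\<close> \<open>u \<noteq> w\<close> tm unfolding vless_def by (simp add: Let_def)
  next
    case c
    have "?A ! k \<noteq> ?A ! depth u" using nth_eq_iff_index_eq[OF rp_distinct[OF assms(1)], of k "depth u"] lenA c by simp
    then have wu: "w \<noteq> u" unfolding w_def using rp(5)[OF assms(1)] by simp
    have "?B ! k \<noteq> ?B ! depth v" using nth_eq_iff_index_eq[OF rp_distinct[OF assms(2)], of k "depth v"] lenA c by simp
    then have wv: "w \<noteq> v" unfolding w_def using rp(5)[OF assms(2)] Akk by simp
    have nk: "?A ! Suc k \<noteq> ?B ! Suc k"
    proof
      assume "?A ! Suc k = ?B ! Suc k"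
      then have "P (Suc k)" unfolding P_def using c by auto
      then show False using kmax by fastforce
    qed
    have eu: "res u ! k \<in> T" "inc (res u ! k) = {w, ?A ! Suc k}" using rp_edge[OF assms(1) c(1)] w_def by auto
    have ev: "res v ! k \<in> T" "inc (res v ! k) = {w, ?B ! Suc k}" using rp_edge[OF assms(2) c(2)] w_def Akk by auto
    have ne: "res u ! k \<noteq> res v ! k"
    proof
      assume "res u ! k = res v ! k"
      then have "{w, ?A ! Suc k} = {w, ?B ! Suc k}" using eu ev by simp
      then show False using nk wu wv by (auto simp: doubleton_eq_iff)
    qed
    have wr: "w \<noteq> r"
    proof
      assume "w = r"
      then have "res u ! k \<in> {e \<in> T. r \<in> inc e}" "res v ! k \<in> {e \<in> T. r \<in> inc e}" using eu ev by auto
      moreover obtain x where "{e \<in> T. r \<in> inc e} = {x}" using root1 card_1_singletonE by blast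
      ultimately show False using ne by simp
    qed
    have "inj_on (num w) {e \<in> E. w \<in> inc e}" using numbering wV wr
      unfolding edge_numbering_def bij_betw_def by auto
    moreover have "res u ! k \<in> {e \<in> E. w \<in> inc e}" "res v ! k \<in> {e \<in> E. w \<in> inc e}" using eu ev TE by auto
    ultimately have nn: "num w (res u ! k) \<noteq> num w (res v ! k)" using ne by (meson inj_on_def)
    have g: "gnum V inc T num w u = num w (res u ! k)" "gnum V inc T num w v = num w (res v ! k)"
      using gn[OF assms(1) c(1)] gn[OF assms(2) c(2)] w_def Akk by auto
    have ku: "key u ! k = num w (res u ! k)" "key v ! k = num w (res v ! k)"
      using keyi[of k u] keyi[of k v] c w_def Akk by auto
    have "(key u, key v) \<in> lexord less_than \<longleftrightarrow> num w (res u ! k) < num w (res v ! k)"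
    proof
      assume "(key u, key v) \<in> lexord less_than"
      then consider (p) "length (key u) < length (key v)" "take (length (key u)) (key v) = key u"
        | (q) i where "i < min (length (key u)) (length (key v))" "take i (key u) = take i (key v)" "key u ! i < key v ! i"
        unfolding lexord_take_index_conv by auto
      then show "num w (res u ! k) < num w (res v ! k)"
      proof cases
        case p
        then have "key v ! k = key u ! k" using c lk by (metis nth_take)
        then show ?thesis using ku nn by simp
      next
        case q
        have "i = k"
        proof (rule ccontr)
          assume "i \<noteq> k"
          then consider "i < k" | "k < i" by linarith
          then show False
          proof cases
            case 1 then show False using keyagree q by simp
          next
            case 2 then have "key u ! k = key v ! k" using q(2) by (metis nth_take)
            then show False using ku nn by simp
          qed
        qed
        then show ?thesis using q ku by simp
      qed
    next
      assume "num w (res u ! k) < num w (res v ! k)"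
      then show "(key u, key v) \<in> lexord less_than"
        unfolding lexord_take_index_conv using takek ku lk c by auto
    qed
    moreover have "key u \<noteq> key v" using ku nn by auto
    ultimately show ?thesis using tm g wu wv uv unfolding vless_def by (simp add: Let_def)
  qed
qed

lemma vless_key: "u \<in> V \<Longrightarrow> v \<in> V \<Longrightarrow> vless V inc T r num u v \<longleftrightarrow> (key u, key v) \<in> lexord less_than"
  using vless_key_aux by blast

lemma key_inj: "u \<in> V \<Longrightarrow> v \<in> V \<Longrightarrow> key u = key v \<Longrightarrow> u = v"
  using vless_key_aux by blast

lemma vless_irrefl: "\<not> vless V inc T r num u u"
  unfolding vless_def by simp

lemma vless_trans: "u \<in> V \<Longrightarrow> v \<in> V \<Longrightarrow> x \<in> V \<Longrightarrow> vless V inc T r num u v \<Longrightarrow> vless V inc T r num v x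
  \<Longrightarrow> vless V inc T r num u x"
  using vless_key lexord_trans trans_less_than by metis

lemma vless_asym: "u \<in> V \<Longrightarrow> v \<in> V \<Longrightarrow> vless V inc T r num u v \<Longrightarrow> \<not> vless V inc T r num v u"
  using vless_trans vless_irrefl by blast

lemma vless_total: "u \<in> V \<Longrightarrow> v \<in> V \<Longrightarrow> u \<noteq> v \<Longrightarrow> vless V inc T r num u v \<or> vless V inc T r num v u"
proof -
  assume a: "u \<in> V" "v \<in> V" "u \<noteq> v"
  have "total less_than" by (auto simp: total_on_def)
  then have "(key u, key v) \<in> lexord less_than \<or> key u = key v \<or> (key v, key u) \<in> lexord less_than"
    using lexord_linear[of less_than] unfolding total_on_def by blast
  then show ?thesis using vless_key a key_inj by blast
qed

end


lemma finite_least: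
  assumes "finite S" "S \<noteq> {}"
    and tot: "\<And>x y. x \<in> S \<Longrightarrow> y \<in> S \<Longrightarrow> x \<noteq> y \<Longrightarrow> R x y \<or> R y x"
    and tr: "\<And>x y z. x \<in> S \<Longrightarrow> y \<in> S \<Longrightarrow> z \<in> S \<Longrightarrow> R x y \<Longrightarrow> R y z \<Longrightarrow> R x z"
  shows "\<exists>x\<in>S. \<forall>y\<in>S. y \<noteq> x \<longrightarrow> R x y"
proof -
  have "F \<subseteq> S \<Longrightarrow> \<exists>x\<in>F. \<forall>y\<in>F. y \<noteq> x \<longrightarrow> R x y" if "finite F" "F \<noteq> {}" for F
    using that
  proof (induction F rule: finite_ne_induct)
    case (singleton x) then show ?case by blast
  next
    case (insert x F)
    obtain m where m: "m \<in> F" "\<forall>y\<in>F. y \<noteq> m \<longrightarrow> R m y" using insert.IH insert.prems by blast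
    have xS: "x \<in> S" and mS: "m \<in> S" using insert.prems m(1) by auto
    have "x \<noteq> m" using \<open>x \<notin> F\<close> m(1) by auto
    then have "R x m \<or> R m x" using tot[OF xS mS] by simp
    then show ?case
    proof
      assume xm: "R x m"
      have "\<forall>y\<in>insert x F. y \<noteq> x \<longrightarrow> R x y"
      proof (intro ballI impI)
        fix y assume y: "y \<in> insert x F" "y \<noteq> x"
        then have yF: "y \<in> F" by blast
        then have yS: "y \<in> S" using insert.prems by auto
        show "R x y"
        proof (cases "y = m")
          case True then show ?thesis using xm by simp
        next
          case False then have "R m y" using m yF by blast
          then show ?thesis using tr[OF xS mS yS] xm by simp
        qed
      qed
      then show ?case by blast
    next
      assume "R m x"
      then have "\<forall>y\<in>insert x F. y \<noteq> m \<longrightarrow> R m y" using m by blast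
      then show ?case using m by blast
    qed
  qed
  then show ?thesis using assms(1,2) by blast
qed

locale gsn = gs V E inc T r num for V :: "'v set" and E :: "'e set" and inc T r num +
  fixes n :: nat
begin

abbreviation "D \<equiv> DnG n V E inc"
abbreviation "ub \<equiv> unblocked V inc T r"
abbreviation "vl \<equiv> vless V inc T r num"
abbreviation "eo \<equiv> eroot V inc T r"
abbreviation "PR \<equiv> pr V inc T r num"
abbreviation "ER \<equiv> er V inc T r"
abbreviation "Wf \<equiv> W n V E inc T r num"

definition "minpos a = (THE i. ub a i \<and> (\<forall>j. ub a j \<and> j \<noteq> i \<longrightarrow> vl (the_Vx (a ! i)) (the_Vx (a ! j))))"

lemma PR_eq: "PR a = (if \<exists>i. ub a i then Some (ER a (minpos a)) else None)"
  unfolding pr_def minpos_def by simp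

lemma D_len: "a \<in> D \<Longrightarrow> length a = n" unfolding DnG_def by auto
lemma D_in: "a \<in> D \<Longrightarrow> i < n \<Longrightarrow> gcell_in V E (a ! i)" unfolding DnG_def by auto
lemma D_disj: "a \<in> D \<Longrightarrow> i < n \<Longrightarrow> j < n \<Longrightarrow> i \<noteq> j \<Longrightarrow> cverts inc (a ! i) \<inter> cverts inc (a ! j) = {}"
  unfolding DnG_def by auto
lemma D_vx: "a \<in> D \<Longrightarrow> i < n \<Longrightarrow> a ! i = Vx v \<Longrightarrow> v \<in> V" using D_in by fastforce
lemma D_ed: "a \<in> D \<Longrightarrow> i < n \<Longrightarrow> a ! i = Ed e \<Longrightarrow> e \<in> E" using D_in by fastforce
lemma D_I: "length a = n \<Longrightarrow> (\<And>i. i < n \<Longrightarrow> gcell_in V E (a ! i)) \<Longrightarrow>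
   (\<And>i j. i < n \<Longrightarrow> j < n \<Longrightarrow> i \<noteq> j \<Longrightarrow> cverts inc (a ! i) \<inter> cverts inc (a ! j) = {}) \<Longrightarrow> a \<in> D"
  unfolding DnG_def by auto

lemma ub_def': "ub a i \<longleftrightarrow> i < length a \<and> (\<exists>v. a ! i = Vx v \<and> v \<noteq> r \<and>
     (\<forall>j<length a. j \<noteq> i \<longrightarrow> inc (eo v) \<inter> cverts inc (a ! j) = {}))"
  unfolding unblocked_def blocked_def by (cases "a ! i") auto

lemma ub_E: assumes "ub a i" obtains v where "i < length a" "a ! i = Vx v" "v \<noteq> r"
    "\<And>j. j < length a \<Longrightarrow> j \<noteq> i \<Longrightarrow> inc (eo v) \<inter> cverts inc (a ! j) = {}"
  using assms unfolding ub_def' by auto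

lemma ub_I: "i < length a \<Longrightarrow> a ! i = Vx v \<Longrightarrow> v \<noteq> r \<Longrightarrow>
    (\<And>j. j < length a \<Longrightarrow> j \<noteq> i \<Longrightarrow> inc (eo v) \<inter> cverts inc (a ! j) = {}) \<Longrightarrow> ub a i"
  unfolding ub_def' by auto

lemma vx_distinct: "a \<in> D \<Longrightarrow> i < n \<Longrightarrow> j < n \<Longrightarrow> i \<noteq> j \<Longrightarrow> a ! i = Vx x \<Longrightarrow> a ! j = Vx y \<Longrightarrow> x \<noteq> y"
  using D_disj by fastforce

lemma ub_V: "a \<in> D \<Longrightarrow> ub a i \<Longrightarrow> the_Vx (a ! i) \<in> V"
  by (metis D_len D_vx the_Vx.simps(1) ub_E)

lemma minpos:
  assumes "a \<in> D" "\<exists>i. ub a i"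
  shows "ub a (minpos a)" "\<And>j. ub a j \<Longrightarrow> j \<noteq> minpos a \<Longrightarrow> vl (the_Vx (a ! minpos a)) (the_Vx (a ! j))"
proof -
  let ?S = "{i. ub a i}"
  let ?R = "\<lambda>i j. vl (the_Vx (a ! i)) (the_Vx (a ! j))"
  have fin: "finite ?S" by (rule finite_subset[of _ "{..<length a}"]) (auto simp: unblocked_def)
  have "\<exists>x\<in>?S. \<forall>y\<in>?S. y \<noteq> x \<longrightarrow> ?R x y"
  proof (rule finite_least[OF fin])
    show "?S \<noteq> {}" using assms by auto
    show "?R x y \<or> ?R y x" if "x \<in> ?S" "y \<in> ?S" "x \<noteq> y" for x y
    proof -
      have ux: "ub a x" "ub a y" using that by auto
      obtain vx where "x < length a" "a ! x = Vx vx" using ub_E[OF ux(1)] by metis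
      moreover obtain vy where "y < length a" "a ! y = Vx vy" using ub_E[OF ux(2)] by metis
      ultimately have "a ! x = Vx vx" "a ! y = Vx vy" "x < n" "y < n" using D_len[OF assms(1)] by auto
      then have "vx \<noteq> vy" "vx \<in> V" "vy \<in> V" using vx_distinct[OF assms(1)] D_vx[OF assms(1)] that by auto
      then show ?thesis using vless_total \<open>a ! x = Vx vx\<close> \<open>a ! y = Vx vy\<close> by auto
    qed
    show "?R x z" if "x \<in> ?S" "y \<in> ?S" "z \<in> ?S" "?R x y" "?R y z" for x y z
      using that vless_trans ub_V[OF assms(1)] by blast
  qed
  then obtain m where m: "ub a m" "\<And>j. ub a j \<Longrightarrow> j \<noteq> m \<Longrightarrow> ?R m j" by auto
  have "minpos a = m" unfolding minpos_def
  proof (rule the_equality)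
    show "ub a m \<and> (\<forall>j. ub a j \<and> j \<noteq> m \<longrightarrow> ?R m j)" using m by auto
    fix i assume i: "ub a i \<and> (\<forall>j. ub a j \<and> j \<noteq> i \<longrightarrow> ?R i j)"
    show "i = m"
    proof (rule ccontr)
      assume "i \<noteq> m"
      then have "?R i m" "?R m i" using i m by auto
      then show False using vless_asym ub_V[OF assms(1)] i m(1) by blast
    qed
  qed
  then show "ub a (minpos a)" "\<And>j. ub a j \<Longrightarrow> j \<noteq> minpos a \<Longrightarrow> ?R (minpos a) j" using m by auto
qed

lemma minpos_eq:
  assumes "a \<in> D" "ub a i" "\<And>j. ub a j \<Longrightarrow> j \<noteq> i \<Longrightarrow> vl (the_Vx (a ! i)) (the_Vx (a ! j))"
  shows "minpos a = i"
proof (rule ccontr)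
  assume ne: "minpos a \<noteq> i"
  have m: "ub a (minpos a)" using minpos(1)[OF assms(1)] assms(2) by blast
  have "vl (the_Vx (a ! i)) (the_Vx (a ! minpos a))" using assms(3) m ne by auto
  moreover have "vl (the_Vx (a ! minpos a)) (the_Vx (a ! i))" using minpos(2)[OF assms(1)] assms(2) ne by auto
  ultimately show False using vless_asym ub_V[OF assms(1)] m assms(2) by blast
qed

lemma ER_eq: "a ! i = Vx v \<Longrightarrow> ER a i = a[i := Ed (eo v)]"
  unfolding er_def by simp

lemma ER_D:
  assumes "a \<in> D" "ub a i"
  shows "ER a i \<in> D"
proof -
  obtain v where v: "i < length a" "a ! i = Vx v" "v \<noteq> r"
    "\<And>j. j < length a \<Longrightarrow> j \<noteq> i \<Longrightarrow> inc (eo v) \<inter> cverts inc (a ! j) = {}"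
    using ub_E[OF assms(2)] by blast
  have vV: "v \<in> V" using D_vx assms v D_len by auto
  have eE: "eo v \<in> E" using eroot_props(1)[OF vV v(3)] TE by auto
  show ?thesis unfolding ER_eq[OF v(2)]
  proof (rule D_I)
    show "length (a[i := Ed (eo v)]) = n" using D_len assms by simp
    show "gcell_in V E (a[i := Ed (eo v)] ! j)" if "j < n" for j
      using D_in[OF assms(1) that] eE v(1) by (cases "j = i") (auto simp: nth_list_update)
    show "cverts inc (a[i := Ed (eo v)] ! j) \<inter> cverts inc (a[i := Ed (eo v)] ! k) = {}"
      if "j < n" "k < n" "j \<noteq> k" for j k
    proof -
      have L: "length a = n" using D_len[OF assms(1)] .
      consider "j = i" | "k = i" | "j \<noteq> i" "k \<noteq> i" using that by blast
      then show ?thesis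
      proof cases
        case 1 then show ?thesis using v(4)[of k] that L by (simp add: nth_list_update)
      next
        case 2 then show ?thesis using v(4)[of j] that L by (simp add: nth_list_update Int_commute)
      next
        case 3 then show ?thesis using D_disj[OF assms(1) that] by simp
      qed
    qed
  qed
qed

lemma filter_update_len:
  "i < length xs \<Longrightarrow> length (filter P (xs[i := x])) + (if P (xs ! i) then 1 else 0) =
     length (filter P xs) + (if P x then 1 else 0)"
proof (induction xs arbitrary: i)
  case Nil then show ?case by simp
next
  case (Cons y ys) then show ?case by (cases i) auto
qed

lemma cdim_upd_vx: "i < length a \<Longrightarrow> a ! i = Ed e \<Longrightarrow> Suc (cdim (a[i := Vx w])) = cdim a"
  unfolding cdim_def using filter_update_len[of i a is_Ed "Vx w"] by simp

definition "coll a \<longleftrightarrow> (\<exists>i w. i < length a \<and> w \<in> V \<and> a ! i = Ed (eo w) \<and> a[i := Vx w] \<in> D \<and> PR (a[i := Vx w]) = Some a)"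

definition "good a \<longleftrightarrow> a \<in> D \<and> PR a \<noteq> None \<and> \<not> coll a"

lemma PR_Some:
  assumes "b \<in> D" "PR b = Some a"
  shows "ub b (minpos b)" "a = ER b (minpos b)" "\<exists>i. ub b i"
    "\<And>j. ub b j \<Longrightarrow> j \<noteq> minpos b \<Longrightarrow> vl (the_Vx (b ! minpos b)) (the_Vx (b ! j))"
proof -
  show ex: "\<exists>i. ub b i" using assms(2) unfolding PR_eq by (auto split: if_splits)
  show "ub b (minpos b)" using minpos(1)[OF assms(1) ex] .
  show "a = ER b (minpos b)" using assms(2) ex unfolding PR_eq by auto
  show "\<And>j. ub b j \<Longrightarrow> j \<noteq> minpos b \<Longrightarrow> vl (the_Vx (b ! minpos b)) (the_Vx (b ! j))"
    using minpos(2)[OF assms(1) ex] by blast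
qed

lemma PR_D: "b \<in> D \<Longrightarrow> PR b = Some a \<Longrightarrow> a \<in> D"
  using PR_Some ER_D by metis

lemma PR_Some_ER:
  assumes "b \<in> D" "PR b = Some a"
  obtains m v where "ub b m" "m = minpos b" "b ! m = Vx v" "v \<in> V" "v \<noteq> r" "m < n"
    "a = b[m := Ed (eo v)]"
proof -
  have u: "ub b (minpos b)" and a: "a = ER b (minpos b)" using PR_Some[OF assms] by auto
  obtain v where v: "minpos b < length b" "b ! minpos b = Vx v" "v \<noteq> r" using ub_E[OF u] by metis
  have "v \<in> V" using D_vx[OF assms(1)] v D_len[OF assms(1)] by auto
  then show ?thesis using that u a v ER_eq[OF v(2)] D_len[OF assms(1)] by auto
qed

lemma PR_coll: assumes "b \<in> D" "PR b = Some a" shows "coll a"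
proof -
  obtain m v where mv: "ub b m" "m = minpos b" "b ! m = Vx v" "v \<in> V" "v \<noteq> r" "m < n" "a = b[m := Ed (eo v)]"
    using PR_Some_ER[OF assms] by metis
  have "a[m := Vx v] = b" using mv D_len[OF assms(1)] by (metis list_update_id list_update_overwrite)
  have "m < length a \<and> v \<in> V \<and> a ! m = Ed (eo v) \<and> a[m := Vx v] \<in> D \<and> PR (a[m := Vx v]) = Some a"
    using mv assms D_len[OF assms(1)] \<open>a[m := Vx v] = b\<close> by simp
  then show ?thesis unfolding coll_def by blast
qed

lemma coll_pos:
  assumes "i < length a" "a ! i = Ed e" "a[i := Vx w] \<in> D" "PR (a[i := Vx w]) = Some a"
  shows "minpos (a[i := Vx w]) = i"
proof (rule ccontr)
  let ?b = "a[i := Vx w]"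
  assume ne: "minpos ?b \<noteq> i"
  obtain m v where mv: "ub ?b m" "m = minpos ?b" "?b ! m = Vx v" "a = ?b[m := Ed (eo v)]" "m < n"
    using PR_Some_ER[OF assms(3,4)] by metis
  have "length ?b = n" using D_len[OF assms(3)] .
  then have "a ! m = Ed (eo v)" using mv(4,5) by (metis nth_list_update_eq)
  moreover have "a ! m = ?b ! m" using ne mv(2) by simp
  ultimately show False using mv(3) by simp
qed

lemma good_D: "good a \<Longrightarrow> a \<in> D" unfolding good_def by simp

lemma ub_mono:
  assumes "ub a i" "length b = length a" "b ! i = a ! i"
    "\<And>j. j < length a \<Longrightarrow> j \<noteq> i \<Longrightarrow> cverts inc (b ! j) \<subseteq> cverts inc (a ! j)"
  shows "ub b i"
proof -
  obtain v where v: "i < length a" "a ! i = Vx v" "v \<noteq> r"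
    "\<And>j. j < length a \<Longrightarrow> j \<noteq> i \<Longrightarrow> inc (eo v) \<inter> cverts inc (a ! j) = {}"
    using ub_E[OF assms(1)] by metis
  show ?thesis
  proof (rule ub_I)
    show "i < length b" "b ! i = Vx v" "v \<noteq> r" using v assms by auto
    fix j assume "j < length b" "j \<noteq> i"
    then show "inc (eo v) \<inter> cverts inc (b ! j) = {}" using v(4)[of j] assms(2) assms(4)[of j] by auto
  qed
qed

lemma D_shrink:
  assumes "a \<in> D" "i < n" "gcell_in V E c" "cverts inc c \<subseteq> cverts inc (a ! i)"
  shows "a[i := c] \<in> D"
proof (rule D_I)
  show "length (a[i := c]) = n" using D_len[OF assms(1)] by simp
  show "gcell_in V E (a[i := c] ! j)" if "j < n" for j
    using D_in[OF assms(1) that] assms(2,3) D_len[OF assms(1)] by (cases "j = i") auto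
  show "cverts inc (a[i := c] ! j) \<inter> cverts inc (a[i := c] ! k) = {}" if "j < n" "k < n" "j \<noteq> k" for j k
    using D_disj[OF assms(1) that] assms(4) D_len[OF assms(1)] that by (cases "j = i"; cases "k = i") auto
qed

lemma coll_has_good:
  assumes "a \<in> D" "coll a"
  shows "\<exists>b. good b \<and> PR b = Some a \<and> Suc (cdim b) = cdim a"
proof -
  define S where "S = {w \<in> V. \<exists>i<length a. a ! i = Ed (eo w) \<and> a[i := Vx w] \<in> D \<and> PR (a[i := Vx w]) = Some a}"
  have finS: "finite S" unfolding S_def using finV by simp
  have neS: "S \<noteq> {}" using assms(2) unfolding coll_def S_def by blast
  have "\<exists>x\<in>S. \<forall>y\<in>S. y \<noteq> x \<longrightarrow> vl x y"
  proof (rule finite_least[OF finS neS])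
    show "vl x y \<or> vl y x" if "x \<in> S" "y \<in> S" "x \<noteq> y" for x y
      using vless_total that unfolding S_def by auto
    show "vl x z" if "x \<in> S" "y \<in> S" "z \<in> S" "vl x y" "vl y z" for x y z
      using vless_trans that unfolding S_def by blast
  qed
  then obtain w0 where w0S: "w0 \<in> S" and w0min: "\<And>y. y \<in> S \<Longrightarrow> y \<noteq> w0 \<Longrightarrow> vl w0 y" by blast
  obtain i0 where i0: "i0 < length a" "a ! i0 = Ed (eo w0)" "a[i0 := Vx w0] \<in> D" "PR (a[i0 := Vx w0]) = Some a" "w0 \<in> V"
    using w0S unfolding S_def by blast
  define b where "b = a[i0 := Vx w0]"
  have La: "length a = n" using D_len[OF assms(1)] .
  have bD: "b \<in> D" using i0 b_def by simp
  have PRb: "PR b = Some a" using i0 b_def by simp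
  have ncoll: "\<not> coll b"
  proof
    assume "coll b"
    then obtain i1 w1 where i1: "i1 < length b" "w1 \<in> V" "b ! i1 = Ed (eo w1)" "b[i1 := Vx w1] \<in> D"
      "PR (b[i1 := Vx w1]) = Some b" unfolding coll_def by blast
    define c where "c = b[i1 := Vx w1]"
    have cD: "c \<in> D" and PRc: "PR c = Some b" using i1 c_def by auto
    have ne: "i1 \<noteq> i0" using i1(3) b_def i0(1) by auto
    have mc: "minpos c = i1" using coll_pos[OF i1(1) i1(3) i1(4) i1(5)] c_def by simp
    have ubc: "ub c i1" using PR_Some(1)[OF cD PRc] mc by simp
    then have w1r: "w1 \<noteq> r" using c_def i1 by (metis gcell.inject(1) nth_list_update_eq ub_E)
    have ci1: "c ! i1 = Vx w1" "c ! i0 = Vx w0" using c_def b_def i1(1) ne i0(1) by auto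
    have cj: "c ! j = a ! j" if "j \<noteq> i0" "j \<noteq> i1" for j using c_def b_def that by simp
    have Lc: "length c = n" using D_len[OF cD] .
    have bi1: "a ! i1 = Ed (eo w1)" using i1(3) b_def ne by simp
    have w1inc: "w1 \<in> inc (eo w1)" using eroot_inc[OF i1(2) w1r] .
    have w0r: "w0 \<noteq> r"
    proof -
      have "ub b (minpos b)" using PR_Some(1)[OF bD PRb] .
      moreover have "minpos b = i0" using coll_pos[OF i0(1) i0(2) i0(3) i0(4)] b_def by simp
      ultimately show ?thesis using b_def i0(1) by (metis gcell.inject(1) nth_list_update_eq ub_E)
    qed
    have ub0: "ub c i0"
    proof (rule ub_I)
      show "i0 < length c" "c ! i0 = Vx w0" "w0 \<noteq> r" using ci1 i0 La Lc w0r by auto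
      fix j assume j: "j < length c" "j \<noteq> i0"
      show "inc (eo w0) \<inter> cverts inc (c ! j) = {}"
      proof (cases "j = i1")
        case True
        have "cverts inc (a ! i0) \<inter> cverts inc (a ! i1) = {}" using D_disj[OF assms(1), of i0 i1] ne i0 i1 La b_def by auto
        then show ?thesis using True ci1 i0(2) bi1 w1inc by auto
      next
        case False
        then show ?thesis using D_disj[OF assms(1), of i0 j] j cj[of j] i0 La Lc by auto
      qed
    qed
    have v10: "vl w1 w0" using PR_Some(4)[OF cD PRc ub0] mc ne ci1 by simp
    define d where "d = a[i1 := Vx w1]"
    have dD: "d \<in> D" unfolding d_def
      using D_shrink[OF assms(1), of i1 "Vx w1"] i1 b_def La bi1 w1inc by auto
    have Ld: "length d = n" using D_len[OF dD] .
    have ubd: "ub d i1"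
    proof (rule ub_I)
      show "i1 < length d" "d ! i1 = Vx w1" "w1 \<noteq> r" using d_def i1 b_def w1r by auto
      fix j assume j: "j < length d" "j \<noteq> i1"
      then show "inc (eo w1) \<inter> cverts inc (d ! j) = {}"
        using D_disj[OF assms(1), of i1 j] d_def bi1 i1(1) b_def La by auto
    qed
    have dmin: "vl (the_Vx (d ! i1)) (the_Vx (d ! j))" if "ub d j" "j \<noteq> i1" for j
    proof -
      have "j \<noteq> i0" using that(1) d_def i0(2) ne by (metis gcell.distinct(1) nth_list_update_neq ub_E)
      have "ub c j"
      proof (rule ub_mono[OF that(1)])
        show "length c = length d" using Lc Ld by simp
        show "c ! j = d ! j" using c_def b_def d_def \<open>j \<noteq> i0\<close> that(2) by simp
        fix l assume "l < length d" "l \<noteq> j"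
        show "cverts inc (c ! l) \<subseteq> cverts inc (d ! l)"
        proof (cases "l = i0")
          case True then show ?thesis using ci1 d_def ne i0(2) w0r eroot_inc[OF i0(5) w0r] by auto
        next
          case False then show ?thesis using c_def b_def d_def i1(1) by (cases "l = i1") auto
        qed
      qed
      then have "vl w1 (the_Vx (c ! j))" using PR_Some(4)[OF cD PRc] mc that(2) ci1 by simp
      then show ?thesis using d_def c_def b_def \<open>j \<noteq> i0\<close> that(2) i1(1) b_def by simp
    qed
    have "minpos d = i1" using minpos_eq[OF dD ubd dmin] by simp
    then have "PR d = Some (ER d i1)" unfolding PR_eq using ubd by auto
    also have "ER d i1 = a"
    proof -
      have "a[i1 := Ed (eo w1)] = a" using bi1 by (metis list_update_id)
      then show ?thesis using ER_eq[of d i1 w1] d_def i1(1) b_def by simp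
    qed
    finally have "w1 \<in> S" unfolding S_def using i1 b_def dD d_def bi1 by auto
    moreover have "w1 \<noteq> w0" using v10 vless_irrefl by auto
    ultimately have "vl w0 w1" using w0min by simp
    then show False using v10 vless_asym i0(5) i1(2) by blast
  qed
  have "good b" unfolding good_def using bD PRb ncoll by simp
  moreover have "Suc (cdim b) = cdim a" using cdim_upd_vx[OF i0(1) i0(2)] b_def by simp
  ultimately show ?thesis using PRb by blast
qed

lemma cdim0: "cdim a = 0 \<Longrightarrow> i < length a \<Longrightarrow> \<not> is_Ed (a ! i)"
  unfolding cdim_def by (metis filter_empty_conv length_0_conv nth_mem)

lemma cdim0_ncoll: "cdim a = 0 \<Longrightarrow> \<not> coll a"
proof
  assume "cdim a = 0" "coll a"
  then obtain i w where "i < length a" "a ! i = Ed (eo w)" unfolding coll_def by blast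
  then show False using cdim0[OF \<open>cdim a = 0\<close>] by fastforce
qed

lemma Wk_char: "Wk n V E inc T r num k = {(a, the (PR a)) | a. good a \<and> cdim a = k}"
proof (induction k)
  case 0 show ?case
    apply (simp only: Wk.simps)
    apply (rule Collect_cong)
    using cdim0_ncoll unfolding good_def by blast
next
  case (Suc k)
  have key: "a \<in> snd ` Wk n V E inc T r num k \<longleftrightarrow> coll a" if aD: "a \<in> D" and ca: "cdim a = Suc k" for a
  proof
    assume "a \<in> snd ` Wk n V E inc T r num k"
    then obtain b where b: "good b" "a = the (PR b)" using Suc by auto
    then have "PR b = Some a" unfolding good_def by auto
    then show "coll a" using PR_coll good_D b(1) by blast
  next
    assume "coll a"
    then obtain b where b: "good b" "PR b = Some a" "Suc (cdim b) = cdim a" using coll_has_good aD by blast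
    then have "(b, a) \<in> Wk n V E inc T r num k" using Suc ca by force
    then show "a \<in> snd ` Wk n V E inc T r num k" by force
  qed
  show ?case
    apply (simp only: Wk.simps)
    apply (rule Collect_cong)
    using key unfolding good_def by blast
qed

lemma Wf_mem: "(x, y) \<in> Wf \<longleftrightarrow> good x \<and> y = the (PR x)"
  unfolding W_def using Wk_char by auto

lemma Wf_mem': "(x, y) \<in> Wf \<Longrightarrow> PR x = Some y \<and> x \<in> D \<and> y \<in> D \<and> \<not> coll x"
  using Wf_mem unfolding good_def by (auto intro: PR_D)

lemma not_ub:
  assumes "i < length a" "a ! i = Vx y" "y \<noteq> r" "\<not> ub a i"
  shows "\<exists>m<length a. m \<noteq> i \<and> inc (eo y) \<inter> cverts inc (a ! m) \<noteq> {}"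
  using assms ub_I by blast

lemma parent_common:
  assumes "y \<in> V" "y \<noteq> r" "z \<in> inc (eo y)" "z \<noteq> y"
  shows "z = parent y"
  using assms eroot_props(2)[OF assms(1,2)] by auto

lemma match_aux:
  assumes aD: "a \<in> D" and bD: "b \<in> D" and cD: "c \<in> D"
    and ua: "ub a i" "minpos a = i" "a ! i = Vx v" "v \<in> V" "v \<noteq> r"
    and ubb: "ub b j" "minpos b = j" "b ! j = Vx w" "w \<in> V" "w \<noteq> r"
    and ij: "i \<noteq> j" and ca: "c = a[i := Ed (eo v)]" and cb: "c = b[j := Ed (eo w)]"
    and vw: "vl v w"
  shows "coll b"
proof -
  have La: "length a = n" "length b = n" "length c = n" using D_len aD bD cD by auto
  have iL: "i < n" "j < n" using ua(1) ubb(1) La unfolding unblocked_def by auto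
  have ci1: "c ! i = Ed (eo v)" unfolding ca using iL La by auto
  have ci2: "c ! j = Ed (eo w)" unfolding cb using iL La by auto
  note ci = ci1 ci2
  have bi: "b ! i = Ed (eo v)" using ci(1) ij unfolding cb by simp
  have ai: "a ! j = Ed (eo w)" using ci(2) ij unfolding ca by simp
  have vinc: "v \<in> inc (eo v)" "w \<in> inc (eo w)" using eroot_inc ua ubb by auto
  have cdisj: "inc (eo v) \<inter> inc (eo w) = {}" using D_disj[OF cD iL ij] ci by simp
  have ac: "a ! l = c ! l" "b ! l = c ! l" if "l \<noteq> i" "l \<noteq> j" for l
  proof -
    show "a ! l = c ! l" unfolding ca using that by simp
    show "b ! l = c ! l" unfolding cb using that by simp
  qed
  define d where "d = b[i := Vx v]"
  have dD: "d \<in> D" unfolding d_def using D_shrink[OF bD iL(1), of "Vx v"] bi vinc ua by auto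
  have Ld: "length d = n" using D_len[OF dD] .
  have di: "d ! i = Vx v" "d ! j = Vx w" "\<And>l. l \<noteq> i \<Longrightarrow> l \<noteq> j \<Longrightarrow> d ! l = c ! l"
    using d_def iL La ij ubb(3) ac by auto
  have ubd: "ub d i"
  proof (rule ub_mono[OF ua(1)])
    show "length d = length a" using Ld La by simp
    show "d ! i = a ! i" using di ua by simp
    fix l assume "l < length a" "l \<noteq> i"
    then show "cverts inc (d ! l) \<subseteq> cverts inc (a ! l)"
      using di ai vinc ac by (cases "l = j") auto
  qed
  have dmin: "vl (the_Vx (d ! i)) (the_Vx (d ! l))" if ul: "ub d l" "l \<noteq> i" for l
  proof (cases "l = j")
    case True then show ?thesis using di vw by simp
  next
    case lj: False
    obtain y where y: "l < length d" "d ! l = Vx y" "y \<noteq> r" using ub_E[OF ul(1)] by metis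
    have yV: "y \<in> V" using D_vx[OF dD] y Ld by auto
    have cl: "c ! l = Vx y" "a ! l = Vx y" "b ! l = Vx y" using di(3)[OF ul(2) lj] y ac[OF ul(2) lj] by auto
    show ?thesis
    proof (rule ccontr)
      assume nv: "\<not> vl (the_Vx (d ! i)) (the_Vx (d ! l))"
      have "y \<noteq> v" using vx_distinct[OF dD, of i l] di y ul iL Ld by auto
      then have yv: "vl y v" using nv vless_total[OF yV ua(4)] di y by auto
      have "\<not> ub a l"
      proof
        assume ual: "ub a l"
        have "vl (the_Vx (a ! minpos a)) (the_Vx (a ! l))" using minpos(2)[OF aD _ ual] ua(1,2) ul(2) by blast
        then have "vl v y" using ua(2,3) cl by simp
        then show False using yv vless_asym yV ua(4) by blast
      qed
      then obtain m where m: "m < length a" "m \<noteq> l" "inc (eo y) \<inter> cverts inc (a ! m) \<noteq> {}"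
        using not_ub[of l a y] cl y La Ld by auto
      have mj: "m = j"
      proof (rule ccontr)
        assume "m \<noteq> j"
        then have "cverts inc (a ! m) = cverts inc (d ! m)" using di ua ac by (cases "m = i") auto
        then show False using ub_E[OF ul(1)] m y La Ld by (metis gcell.inject(1))
      qed
      have "\<not> ub b l"
      proof
        assume ubl: "ub b l"
        have "vl (the_Vx (b ! minpos b)) (the_Vx (b ! l))" using minpos(2)[OF bD _ ubl] ubb(1,2) lj by blast
        then have "vl w y" using ubb(2,3) cl by simp
        then have "vl v y" using vw vless_trans ua(4) ubb(4) yV by blast
        then show False using yv vless_asym yV ua(4) by blast
      qed
      then obtain m' where m': "m' < length b" "m' \<noteq> l" "inc (eo y) \<inter> cverts inc (b ! m') \<noteq> {}"
        using not_ub[of l b y] cl y La Ld by auto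
      have mi: "m' = i"
      proof (rule ccontr)
        assume "m' \<noteq> i"
        then have "cverts inc (b ! m') = cverts inc (d ! m')" using di ubb ac by (cases "m' = j") auto
        then show False using ub_E[OF ul(1)] m' y La Ld by (metis gcell.inject(1))
      qed
      obtain z' where z': "z' \<in> inc (eo y)" "z' \<in> inc (eo w)" using m mj ai by auto
      obtain z where z: "z \<in> inc (eo y)" "z \<in> inc (eo v)" using m' mi bi by auto
      have "z' \<noteq> y" using D_disj[OF cD, of l j] cl ci z' y Ld lj iL by auto
      have "z \<noteq> y" using D_disj[OF cD, of l i] cl ci z y Ld ul(2) iL by auto
      have "z = parent y" "z' = parent y" using parent_common yV y(3) z z' \<open>z \<noteq> y\<close> \<open>z' \<noteq> y\<close> by auto
      then show False using cdisj z z' by auto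
    qed
  qed
  have "minpos d = i" using minpos_eq[OF dD ubd dmin] by simp
  then have "PR d = Some (ER d i)" unfolding PR_eq using ubd by auto
  also have "ER d i = b"
  proof -
    have "b[i := Ed (eo v)] = b" using bi by (metis list_update_id)
    then show ?thesis using ER_eq[of d i v] d_def iL La by simp
  qed
  finally have "i < length b \<and> v \<in> V \<and> b ! i = Ed (eo v) \<and> b[i := Vx v] \<in> D \<and> PR (b[i := Vx v]) = Some b"
    using iL La bi ua dD d_def by simp
  then show ?thesis unfolding coll_def by blast
qed

lemma matching:
  assumes "good a" "good b" "PR a = PR b"
  shows "a = b"
proof -
  have aD: "a \<in> D" and bD: "b \<in> D" using assms good_D by auto
  obtain c where c: "PR a = Some c" using assms(1) unfolding good_def by auto
  have cb: "PR b = Some c" using c assms by simp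
  have cD: "c \<in> D" using PR_D[OF aD c] .
  obtain i v where iv: "ub a i" "i = minpos a" "a ! i = Vx v" "v \<in> V" "v \<noteq> r" "i < n" "c = a[i := Ed (eo v)]"
    using PR_Some_ER[OF aD c] by metis
  obtain j w where jw: "ub b j" "j = minpos b" "b ! j = Vx w" "w \<in> V" "w \<noteq> r" "j < n" "c = b[j := Ed (eo w)]"
    using PR_Some_ER[OF bD cb] by metis
  have La: "length a = n" "length b = n" using D_len aD bD by auto
  show ?thesis
  proof (cases "i = j")
    case True
    have "c ! i = Ed (eo v)" unfolding iv(7) using La iv(6) by simp
    moreover have "c ! i = Ed (eo w)" unfolding jw(7) using La iv(6) True by simp
    ultimately have "Ed (eo v) = Ed (eo w)" by simp
    then have "v = w" using eroot_inj iv jw by auto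
    have "c[i := Vx v] = a[i := Vx v]" unfolding iv(7) by simp
    also have "\<dots> = a" using iv(3) by (metis list_update_id)
    finally have A: "a = c[i := Vx v]" by simp
    have "c[j := Vx w] = b[j := Vx w]" unfolding jw(7) by simp
    also have "\<dots> = b" using jw(3) by (metis list_update_id)
    finally have "b = c[j := Vx w]" by simp
    then show ?thesis using A True \<open>v = w\<close> by simp
  next
    case False
    have "v \<noteq> w"
    proof
      assume "v = w"
      have "c ! i = Ed (eo v)" unfolding iv(7) using La iv(6) by simp
      moreover have "c ! j = Ed (eo w)" unfolding jw(7) using La jw(6) by simp
      ultimately show False using D_disj[OF cD iv(6) jw(6) False] eroot_inc[OF iv(4,5)] \<open>v = w\<close> by auto
    qed
    then have "vl v w \<or> vl w v" using vless_total iv jw by auto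
    then show ?thesis
    proof
      assume "vl v w"
      then have "coll b" using match_aux[OF aD bD cD iv(1) iv(2)[symmetric] iv(3,4,5) jw(1) jw(2)[symmetric] jw(3,4,5) False iv(7) jw(7)] by simp
      then show ?thesis using assms(2) unfolding good_def by simp
    next
      assume "vl w v"
      then have "coll a" using match_aux[OF bD aD cD jw(1) jw(2)[symmetric] jw(3,4,5) iv(1) iv(2)[symmetric] iv(3,4,5) _ jw(7) iv(7)] False by simp
      then show ?thesis using assms(1) unfolding good_def by simp
    qed
  qed
qed


lemma sum_list_map_upd:
  "i < length xs \<Longrightarrow> sum_list (map h (xs[i := x])) + h (xs ! i) = sum_list (map h xs) + (h x :: nat)"
proof (induction xs arbitrary: i)
  case Nil then show ?case by simp
next
  case (Cons y ys) then show ?case by (cases i) auto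
qed

definition "hv c = (case c of Vx x \<Rightarrow> 2 * depth x | Ed e \<Rightarrow> if e \<in> T then sum depth (inc e) else 0)"
definition "phi a = sum_list (map hv a)"
definition "nt c = (case c of Ed e \<Rightarrow> e \<notin> T | Vx x \<Rightarrow> False)"
definition "ntc a = length (filter nt a)"
definition "mv a = the_Vx (a ! minpos a)"
definition "Rel x y \<longleftrightarrow> ntc x < ntc y \<or> (ntc x = ntc y \<and> (phi x < phi y \<or> (phi x = phi y \<and> vl (mv x) (mv y))))"

lemma good_mv: "good a \<Longrightarrow> mv a \<in> V \<and> ub a (minpos a)"
proof -
  assume "good a"
  then have aD: "a \<in> D" and ex: "\<exists>i. ub a i" unfolding good_def PR_eq by (auto split: if_splits)
  have "ub a (minpos a)" using minpos(1)[OF aD ex] .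
  then show ?thesis unfolding mv_def using ub_V[OF aD] by simp
qed

lemma Rel_trans: "good x \<Longrightarrow> good y \<Longrightarrow> good z \<Longrightarrow> Rel x y \<Longrightarrow> Rel y z \<Longrightarrow> Rel x z"
proof -
  assume g: "good x" "good y" "good z" and r: "Rel x y" "Rel y z"
  have "vl (mv x) (mv y) \<Longrightarrow> vl (mv y) (mv z) \<Longrightarrow> vl (mv x) (mv z)"
    using vless_trans good_mv g by blast
  then show "Rel x z" using r unfolding Rel_def by auto
qed

lemma Rel_irrefl: "\<not> Rel x x"
  unfolding Rel_def using vless_irrefl by simp

lemma hv_eo: "v \<in> V \<Longrightarrow> v \<noteq> r \<Longrightarrow> hv (Ed (eo v)) + 1 = hv (Vx v)"
proof -
  assume a: "v \<in> V" "v \<noteq> r"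
  have "sum depth (inc (eo v)) = depth (parent v) + depth v" using eroot_props(2,6)[OF a] by simp
  then show ?thesis unfolding hv_def using eroot_props(1,5)[OF a] by simp
qed

lemma step:
  assumes g: "good t" and PRt: "PR t = Some nu" and f: "imm_face inc t' nu" and ne: "t' \<noteq> t" and g': "good t'"
  shows "Rel t' t"
proof -
  have tD: "t \<in> D" using good_D g by simp
  have nuD: "nu \<in> D" using PR_D[OF tD PRt] .
  have t'D: "t' \<in> D" using good_D g' by simp
  obtain i v where iv: "ub t i" "i = minpos t" "t ! i = Vx v" "v \<in> V" "v \<noteq> r" "i < n" "nu = t[i := Ed (eo v)]"
    using PR_Some_ER[OF tD PRt] by metis
  have mvt: "mv t = v" unfolding mv_def using iv by simp
  have L: "length t = n" "length nu = n" "length t' = n" using D_len tD nuD t'D by auto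
  obtain j e x where jex: "j < length nu" "nu ! j = Ed e" "x \<in> inc e" "t' = nu[j := Vx x]"
    using f unfolding imm_face_def by blast
  have jn: "j < n" using jex L by simp
  have eE: "e \<in> E" using D_ed[OF nuD jn jex(2)] .
  have xV: "x \<in> V" using inc2[OF eE] jex by auto
  have nui: "nu ! i = Ed (eo v)" using iv L by simp
  have eoT: "eo v \<in> T" using eroot_props(1)[OF iv(4,5)] .
  have ntc_nu: "ntc nu = ntc t"
    using filter_update_len[of i t nt "Ed (eo v)"] iv L eoT unfolding ntc_def nt_def by simp
  have phi_nu: "phi nu + 1 = phi t"
    using sum_list_map_upd[of i t hv "Ed (eo v)"] iv L hv_eo[OF iv(4,5)] unfolding phi_def by simp
  have ntc_t': "ntc t' + (if nt (Ed e) then 1 else 0) = ntc nu"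
    using filter_update_len[of j nu nt "Vx x"] jex unfolding ntc_def nt_def by simp
  have phi_t': "phi t' + hv (Ed e) = phi nu + 2 * depth x"
    using sum_list_map_upd[of j nu hv "Vx x"] jex unfolding phi_def hv_def by simp
  show ?thesis
  proof (cases "e \<in> T")
    case False
    then have "ntc t' < ntc t" using ntc_t' ntc_nu unfolding nt_def by simp
    then show ?thesis unfolding Rel_def by simp
  next
    case eT: True
    have ntceq: "ntc t' = ntc t" using ntc_t' ntc_nu eT unfolding nt_def by simp
    obtain y where y: "inc e = {x, y}" "x \<noteq> y" "x \<in> V" "y \<in> V"
      "(depth x = Suc (depth y) \<and> x \<noteq> r \<and> eo x = e) \<or> (depth y = Suc (depth x) \<and> y \<noteq> r \<and> eo y = e)"
      using tree_edge[OF eT jex(3)] by blast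
    have hve: "hv (Ed e) = depth x + depth y" unfolding hv_def using eT y by simp
    show ?thesis
    proof (cases "depth y = Suc (depth x)")
      case True
      then have "phi t' < phi t" using phi_t' phi_nu hve by simp
      then show ?thesis unfolding Rel_def using ntceq by simp
    next
      case False
      then have dx: "depth x = Suc (depth y)" "x \<noteq> r" "eo x = e" using y(5) by auto
      have phieq: "phi t' = phi t" using phi_t' phi_nu hve dx by simp
      have ji: "j \<noteq> i"
      proof
        assume "j = i"
        then have "eo x = eo v" using jex(2) nui dx by simp
        then have "x = v" using eroot_inj[OF xV dx(2) iv(4,5)] by simp
        then have "t' = t" using jex(4) \<open>j = i\<close> iv L by (metis list_update_id list_update_overwrite)
        then show False using ne by simp
      qed
      have tj: "t ! j = Ed e" using jex(2) ji iv(7) by simp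
      have t'i: "t' ! i = Ed (eo v)" using jex(4) ji nui by simp
      have t'j: "t' ! j = Vx x" using jex(4) jn L by simp
      have t'l: "t' ! l = t ! l" if "l \<noteq> i" "l \<noteq> j" for l using that jex(4) iv(7) by simp
      have xinc: "x \<in> inc e" using jex(3) .
      define d where "d = t[j := Vx x]"
      have dD: "d \<in> D" unfolding d_def using D_shrink[OF tD jn, of "Vx x"] xV xinc tj by auto
      have Ld: "length d = n" using D_len[OF dD] .
      have d_alt: "t'[i := Vx v] = d"
      proof -
        have "t'[i := Vx v] = t[i := Ed (eo v), j := Vx x, i := Vx v]" using jex(4) iv(7) by simp
        also have "\<dots> = t[j := Vx x, i := Vx v]" using ji by (simp add: list_update_swap)
        also have "\<dots> = t[j := Vx x]" using iv(3) ji by (metis list_update_id list_update_swap)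
        finally show ?thesis unfolding d_def .
      qed
      have di: "d ! i = Vx v" "d ! j = Vx x" "\<And>l. l \<noteq> j \<Longrightarrow> d ! l = t ! l" using d_def ji iv jn L by auto
      have ubd: "ub d i"
      proof (rule ub_mono[OF iv(1)])
        show "length d = length t" using Ld L by simp
        show "d ! i = t ! i" using di iv by simp
        fix l assume "l < length t" "l \<noteq> i"
        then show "cverts inc (d ! l) \<subseteq> cverts inc (t ! l)" using di tj xinc by (cases "l = j") auto
      qed
      have nc: "PR d \<noteq> Some t'"
      proof
        assume "PR d = Some t'"
        then have "i < length t' \<and> v \<in> V \<and> t' ! i = Ed (eo v) \<and> t'[i := Vx v] \<in> D \<and> PR (t'[i := Vx v]) = Some t'"
          using d_alt t'i iv L dD by simp
        then have "coll t'" unfolding coll_def by blast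
        then show False using g' unfolding good_def by simp
      qed
      have exd: "\<exists>i. ub d i" using ubd by blast
      define p where "p = minpos d"
      have ubp: "ub d p" using minpos(1)[OF dD exd] p_def by simp
      have pi: "p \<noteq> i"
      proof
        assume "p = i"
        then have "PR d = Some (ER d i)" unfolding PR_eq using exd p_def by simp
        moreover have "ER d i = t'"
        proof -
          have "ER d i = d[i := Ed (eo v)]" using ER_eq[OF di(1)] .
          also have "\<dots> = t'[i := Ed (eo v)]" using d_alt[symmetric] by simp
          also have "\<dots> = t'" using t'i by (metis list_update_id)
          finally show ?thesis .
        qed
        ultimately show False using nc by simp
      qed
      obtain yy where yy: "p < length d" "d ! p = Vx yy" "yy \<noteq> r" using ub_E[OF ubp] by metis
      have yyV: "yy \<in> V" using D_vx[OF dD] yy Ld by auto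
      have yv: "vl yy v" using minpos(2)[OF dD exd ubd] pi p_def di yy by simp
      have ubt'p: "ub t' p"
      proof (cases "p = j")
        case True
        show ?thesis
        proof (rule ub_I)
          show "p < length t'" "t' ! p = Vx x" "x \<noteq> r" using True t'j jn L dx by auto
          fix l assume l: "l < length t'" "l \<noteq> p"
          have "cverts inc (nu ! j) \<inter> cverts inc (nu ! l) = {}" using D_disj[OF nuD jn, of l] l L True by simp
          moreover have "t' ! l = nu ! l" using jex(4) l True by simp
          ultimately show "inc (eo x) \<inter> cverts inc (t' ! l) = {}" using dx jex(2) by simp
        qed
      next
        case pj: False
        have t'p: "t' ! p = Vx yy" using t'l[OF pi pj] di(3)[OF pj] yy by simp
        show ?thesis
        proof (rule ub_I)
          show "p < length t'" "t' ! p = Vx yy" "yy \<noteq> r" using yy Ld L t'p by auto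
          fix l assume l: "l < length t'" "l \<noteq> p"
          show "inc (eo yy) \<inter> cverts inc (t' ! l) = {}"
          proof (cases "l = i")
            case False
            have "t' ! l = d ! l"
            proof (cases "l = j")
              case True then show ?thesis using t'j di by simp
            next
              case False then show ?thesis using t'l \<open>l \<noteq> i\<close> di(3) by simp
            qed
            then show ?thesis using ub_E[OF ubp] yy l Ld L by (metis gcell.inject(1))
          next
            case li: True
            show ?thesis
            proof (rule ccontr)
              assume "inc (eo yy) \<inter> cverts inc (t' ! l) \<noteq> {}"
              then obtain z where z: "z \<in> inc (eo yy)" "z \<in> inc (eo v)" using li t'i by auto
              have tp: "t ! p = Vx yy" using di(3)[OF pj] yy by simp
              have "\<not> ub t p"
              proof
                assume ubtp: "ub t p"
                have "vl (the_Vx (t ! minpos t)) (the_Vx (t ! p))" using minpos(2)[OF tD _ ubtp] iv(1,2) pi by blast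
                then have "vl v yy" using iv(2,3) tp by simp
                then show False using yv vless_asym yyV iv(4) by blast
              qed
              then obtain m where m: "m < length t" "m \<noteq> p" "inc (eo yy) \<inter> cverts inc (t ! m) \<noteq> {}"
                using not_ub[of p t yy] tp yy L Ld by auto
              have mj: "m = j"
              proof (rule ccontr)
                assume "m \<noteq> j"
                then have "t ! m = d ! m" using di(3) by simp
                then show False using ub_E[OF ubp] m yy L Ld by (metis gcell.inject(1))
              qed
              obtain z' where z': "z' \<in> inc (eo yy)" "z' \<in> inc e" using m mj tj by auto
              have nup: "nu ! p = Vx yy" using iv(7) pi tp by simp
              have "z \<noteq> y'" if "y' = yy" for y' using D_disj[OF nuD, of p i] nup nui z that yy Ld pi iv(6) by auto
              then have zy: "z \<noteq> yy" by simp
              have z'y: "z' \<noteq> yy" using D_disj[OF nuD, of p j] nup jex(2) z' yy Ld pj jn by auto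
              have "z = parent yy" "z' = parent yy" using parent_common yyV yy(3) z z' zy z'y by auto
              moreover have "cverts inc (nu ! i) \<inter> cverts inc (nu ! j) = {}" using D_disj[OF nuD iv(6) jn] ji by simp
              ultimately show False using z z' nui jex(2) by auto
            qed
          qed
        qed
      qed
      have ext': "\<exists>i. ub t' i" using ubt'p by blast
      have mvV: "mv t' \<in> V" using good_mv[OF g'] by simp
      have "vl (mv t') v"
      proof (cases "minpos t' = p")
        case True
        then have "mv t' = yy" unfolding mv_def using t'l pi yy di
          by (cases "p = j") (auto simp: t'j)
        then show ?thesis using yv by simp
      next
        case False
        have "vl (mv t') (the_Vx (t' ! p))" unfolding mv_def using minpos(2)[OF t'D ext' ubt'p] False by simp
        moreover have "the_Vx (t' ! p) = yy" using t'l pi yy di by (cases "p = j") (auto simp: t'j)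
        ultimately show ?thesis using yv vless_trans mvV yyV iv(4) by blast
      qed
      then show ?thesis unfolding Rel_def using ntceq phieq mvt by simp
    qed
  qed
qed


section \<open>Equivariance\<close>

lemma act_len: "length (act a s) = length a" unfolding act_def by simp

lemma act_nth: "i < length a \<Longrightarrow> act a s ! i = a ! s i" unfolding act_def by simp

lemma perm_lt: "s permutes {..<n} \<Longrightarrow> i < n \<longleftrightarrow> s i < n"
  using permutes_in_image[of s "{..<n}" i] by simp

lemma act_D: assumes "s permutes {..<n}" "a \<in> D" shows "act a s \<in> D"
proof (rule D_I)
  have L: "length a = n" using D_len assms(2) by simp
  show "length (act a s) = n" using L act_len[of a s] by simp
  show "gcell_in V E (act a s ! i)" if "i < n" for i
    using D_in[OF assms(2), of "s i"] act_nth[of i a s] L that perm_lt[OF assms(1), of i] by simp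
  show "cverts inc (act a s ! i) \<inter> cverts inc (act a s ! j) = {}" if "i < n" "j < n" "i \<noteq> j" for i j
  proof -
    have "s i \<noteq> s j" using permutes_inj[OF assms(1)] that(3) by (meson injD)
    then show ?thesis using D_disj[OF assms(2), of "s i" "s j"] act_nth[of i a s] act_nth[of j a s] L that
        perm_lt[OF assms(1), of i] perm_lt[OF assms(1), of j] by simp
  qed
qed

lemma act_act_inv: assumes "s permutes {..<n}" "length a = n" shows "act (act a s) (inv s) = a"
proof -
  have "act (act a s) (inv s) = permute_list (inv s) (permute_list s a)" unfolding act_def permute_list_def by simp
  also have "\<dots> = permute_list (s \<circ> inv s) a" using permute_list_compose[of "inv s" a s] permutes_inv[OF assms(1)] assms(2) by simp
  also have "\<dots> = a" using permutes_inv_o(1)[OF assms(1)] by simp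
  finally show ?thesis .
qed

lemma ub_act:
  assumes "s permutes {..<n}" "length a = n"
  shows "ub (act a s) i \<longleftrightarrow> ub a (s i)"
proof (cases "i < n")
  case False
  then have "s i = i" using permutes_not_in[OF assms(1)] by simp
  then show ?thesis using False assms act_len[of a s] unfolding unblocked_def by simp
next
  case True
  have si: "s i < n" using perm_lt[OF assms(1)] True by simp
  have ex: "(\<forall>j<n. j \<noteq> i \<longrightarrow> P (s j)) \<longleftrightarrow> (\<forall>j<n. j \<noteq> s i \<longrightarrow> P j)" for P
  proof
    assume h: "\<forall>j<n. j \<noteq> i \<longrightarrow> P (s j)"
    show "\<forall>j<n. j \<noteq> s i \<longrightarrow> P j"
    proof (intro allI impI)
      fix j assume "j < n" "j \<noteq> s i"
      then have "inv s j < n" "inv s j \<noteq> i" using perm_lt[OF permutes_inv[OF assms(1)]] permutes_inverses[OF assms(1)] by metis+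
      then show "P j" using h permutes_inverses(1)[OF assms(1)] by metis
    qed
  next
    assume h: "\<forall>j<n. j \<noteq> s i \<longrightarrow> P j"
    show "\<forall>j<n. j \<noteq> i \<longrightarrow> P (s j)"
      using h perm_lt[OF assms(1)] permutes_inj[OF assms(1)] by (metis injD)
  qed
  have ai: "act a s ! i = a ! s i" using act_nth[of i a s] True assms(2) by simp
  have aj: "\<forall>j<n. act a s ! j = a ! s j" using act_nth[of _ a s] assms(2) by simp
  have aj': "(\<forall>j<n. j \<noteq> i \<longrightarrow> P (act a s ! j)) \<longleftrightarrow> (\<forall>j<n. j \<noteq> i \<longrightarrow> P (a ! s j))" for P
    using aj by auto
  show ?thesis unfolding ub_def' act_len assms(2) ai
  proof (cases "a ! s i")
    case (Vx v)
    then show "(i < n \<and> (\<exists>v. a ! s i = Vx v \<and> v \<noteq> r \<and> (\<forall>j<n. j \<noteq> i \<longrightarrow> inc (eo v) \<inter> cverts inc (act a s ! j) = {}))) =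
      (s i < n \<and> (\<exists>v. a ! s i = Vx v \<and> v \<noteq> r \<and> (\<forall>j<n. j \<noteq> s i \<longrightarrow> inc (eo v) \<inter> cverts inc (a ! j) = {})))"
      using ex[of "\<lambda>j. inc (eo v) \<inter> cverts inc (a ! j) = {}"] aj'[of "\<lambda>c. inc (eo v) \<inter> cverts inc c = {}"] True si
      by simp
  qed simp
qed

lemma act_nth': "s permutes {..<n} \<Longrightarrow> length a = n \<Longrightarrow> i < n \<Longrightarrow> act a s ! i = a ! s i"
  by (simp add: act_nth)

lemma inv_lt: "s permutes {..<n} \<Longrightarrow> m < n \<Longrightarrow> inv s m < n"
  using perm_lt[OF permutes_inv] by blast

lemma minpos_act:
  assumes s: "s permutes {..<n}" and aD: "a \<in> D" and ex: "\<exists>i. ub a i"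
  shows "minpos (act a s) = inv s (minpos a)"
proof -
  define m where "m = minpos a"
  have L: "length a = n" using D_len aD by simp
  have um: "ub a m" using minpos(1)[OF aD ex] m_def by simp
  have mn: "m < n" using um L unfolding unblocked_def by simp
  have sinv: "s (inv s m) = m" using permutes_inverses(1)[OF s] by simp
  have u1: "ub (act a s) (inv s m)" using ub_act[OF s L] sinv um by simp
  have an: "act a s ! inv s m = a ! m" using act_nth'[OF s L inv_lt[OF s mn]] sinv by simp
  show ?thesis unfolding m_def[symmetric]
  proof (rule minpos_eq[OF act_D[OF s aD] u1])
    fix j assume j: "ub (act a s) j" "j \<noteq> inv s m"
    have "ub a (s j)" using ub_act[OF s L] j(1) by simp
    moreover have "s j \<noteq> m" using j(2) permutes_inv_eq[OF s] by metis
    ultimately have "vl (the_Vx (a ! m)) (the_Vx (a ! s j))" using minpos(2)[OF aD ex] m_def by simp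
    moreover have "j < n" using j(1) act_len[of a s] L unfolding unblocked_def by simp
    ultimately show "vl (the_Vx (act a s ! inv s m)) (the_Vx (act a s ! j))" using an act_nth'[OF s L] by simp
  qed
qed

lemma upd_act:
  assumes s: "s permutes {..<n}" and L: "length a = n" and i: "i < n"
  shows "(act a s)[i := x] = act (a[s i := x]) s"
proof (rule nth_equalityI)
  show "length ((act a s)[i := x]) = length (act (a[s i := x]) s)" by (simp add: act_len)
  fix k assume "k < length ((act a s)[i := x])"
  then have k: "k < n" using act_len[of a s] L by simp
  have "s k = s i \<longleftrightarrow> k = i" using permutes_inj[OF s] by (meson injD)
  then show "(act a s)[i := x] ! k = act (a[s i := x]) s ! k"
    using act_nth'[OF s L k] act_nth'[OF s _ k, of "a[s i := x]"] L k i act_len[of a s] perm_lt[OF s, of k]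
    by (auto simp: nth_list_update)
qed

lemma PR_act:
  assumes s: "s permutes {..<n}" and aD: "a \<in> D"
  shows "PR (act a s) = map_option (\<lambda>c. act c s) (PR a)"
proof -
  have L: "length a = n" using D_len aD by simp
  have exeq: "(\<exists>i. ub (act a s) i) \<longleftrightarrow> (\<exists>i. ub a i)"
    using ub_act[OF s L] permutes_inverses(1)[OF s] by metis
  show ?thesis
  proof (cases "\<exists>i. ub a i")
    case False then show ?thesis unfolding PR_eq using exeq by simp
  next
    case True
    define m where "m = minpos a"
    have um: "ub a m" using minpos(1)[OF aD True] m_def by simp
    obtain v where v: "m < length a" "a ! m = Vx v" using ub_E[OF um] by metis
    have mn: "m < n" using v L by simp
    have sinv: "s (inv s m) = m" using permutes_inverses(1)[OF s] by simp
    have an: "act a s ! inv s m = Vx v" using act_nth'[OF s L inv_lt[OF s mn]] sinv v by simp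
    have "ER (act a s) (inv s m) = (act a s)[inv s m := Ed (eo v)]" using ER_eq[OF an] .
    also have "\<dots> = act (a[m := Ed (eo v)]) s" using upd_act[OF s L inv_lt[OF s mn]] sinv by simp
    also have "\<dots> = act (ER a m) s" using ER_eq[OF v(2)] by simp
    finally show ?thesis unfolding PR_eq using exeq True minpos_act[OF s aD True] m_def by simp
  qed
qed

lemma coll_act:
  assumes s: "s permutes {..<n}" and aD: "a \<in> D" and c: "coll a"
  shows "coll (act a s)"
proof -
  have L: "length a = n" using D_len aD by simp
  obtain i w where iw: "i < length a" "w \<in> V" "a ! i = Ed (eo w)" "a[i := Vx w] \<in> D" "PR (a[i := Vx w]) = Some a"
    using c unfolding coll_def by blast
  have sinv: "s (inv s i) = i" using permutes_inverses(1)[OF s] by simp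
  have iin: "inv s i < n" using inv_lt[OF s] iw L by simp
  have u: "(act a s)[inv s i := Vx w] = act (a[i := Vx w]) s" using upd_act[OF s L iin] sinv by simp
  have "inv s i < length (act a s) \<and> w \<in> V \<and> act a s ! inv s i = Ed (eo w) \<and>
     (act a s)[inv s i := Vx w] \<in> D \<and> PR ((act a s)[inv s i := Vx w]) = Some (act a s)"
    using iin act_len[of a s] L iw act_nth'[OF s L iin] sinv u act_D[OF s iw(4)] PR_act[OF s iw(4)] by simp
  then show ?thesis unfolding coll_def by blast
qed

lemma good_act:
  assumes s: "s permutes {..<n}" and g: "good a"
  shows "good (act a s)"
proof -
  have aD: "a \<in> D" using g good_D by simp
  have L: "length a = n" using D_len aD by simp
  have D': "act a s \<in> D" using act_D[OF s aD] .
  have "PR (act a s) \<noteq> None" using PR_act[OF s aD] g unfolding good_def by simp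
  moreover have "\<not> coll (act a s)"
  proof
    assume "coll (act a s)"
    then have "coll (act (act a s) (inv s))" using coll_act[OF permutes_inv[OF s] D'] by simp
    then show False using act_act_inv[OF s L] g unfolding good_def by simp
  qed
  ultimately show ?thesis unfolding good_def using D' by simp
qed

lemma cdim_act:
  assumes s: "s permutes {..<n}" and L: "length a = n"
  shows "cdim (act a s) = cdim a"
proof -
  have "mset (act a s) = mset a" using mset_permute_list[of s a] s L unfolding act_def permute_list_def by simp
  then have "mset (filter is_Ed (act a s)) = mset (filter is_Ed a)" by (simp add: mset_filter)
  then show ?thesis unfolding cdim_def by (metis size_mset)
qed

lemma W_equiv:
  assumes "(b, a) \<in> Wf" "s permutes {..<n}"
  shows "(act b s, act a s) \<in> Wf"
proof -
  have g: "good b" and a: "a = the (PR b)" using Wf_mem assms(1) by auto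
  have bD: "b \<in> D" using g good_D by simp
  have "PR b = Some a" using g a unfolding good_def by auto
  then have "PR (act b s) = Some (act a s)" using PR_act[OF assms(2) bD] by simp
  then show ?thesis using Wf_mem good_act[OF assms(2) g] by simp
qed

section \<open>Gradient field\<close>

lemma W_face: assumes "(t, nu) \<in> Wf" shows "imm_face inc t nu"
proof -
  have P: "PR t = Some nu" and tD: "t \<in> D" using Wf_mem'[OF assms] by auto
  obtain m v where mv: "ub t m" "m = minpos t" "t ! m = Vx v" "v \<in> V" "v \<noteq> r" "m < n" "nu = t[m := Ed (eo v)]"
    using PR_Some_ER[OF tD P] by metis
  have L: "length t = n" using D_len tD by simp
  have "t = nu[m := Vx v]" using mv by (metis list_update_id list_update_overwrite)
  moreover have "m < length nu" "nu ! m = Ed (eo v)" "v \<in> inc (eo v)" using mv L eroot_inc by auto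
  ultimately show ?thesis unfolding imm_face_def by blast
qed

lemma W_dvf: "discrete_vector_field D (imm_face inc) Wf"
  unfolding discrete_vector_field_def
proof (intro conjI ballI impI)
  show "case x of (\<tau>, \<nu>) \<Rightarrow> \<tau> \<in> D \<and> \<nu> \<in> D \<and> imm_face inc \<tau> \<nu>" if "x \<in> Wf" for x
    using that Wf_mem' W_face by (cases x) auto
  fix p q assume pq: "p \<in> Wf" "q \<in> Wf" "p \<noteq> q"
  obtain a c where p: "p = (a, c)" by (cases p)
  obtain b c' where q: "q = (b, c')" by (cases q)
  have pa: "PR a = Some c" "a \<in> D" "\<not> coll a" using Wf_mem' pq(1) p by auto
  have pb: "PR b = Some c'" "b \<in> D" "\<not> coll b" using Wf_mem' pq(2) q by auto
  have ga: "good a" and gb: "good b" using Wf_mem pq p q by auto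
  have "a \<noteq> b" using pq pa pb p q by auto
  moreover have "a \<noteq> c'" using PR_coll[OF pb(2,1)] pa(3) by auto
  moreover have "c \<noteq> b" using PR_coll[OF pa(2,1)] pb(3) by auto
  moreover have "c \<noteq> c'" using matching[OF ga gb] pa pb \<open>a \<noteq> b\<close> by auto
  ultimately show "{fst p, snd p} \<inter> {fst q, snd q} = {}" using p q by auto
qed

lemma W_acyclic: "\<not> (\<exists>ts. V_path (imm_face inc) Wf ts \<and> length ts \<ge> 2 \<and> hd ts = last ts)"
proof
  assume "\<exists>ts. V_path (imm_face inc) Wf ts \<and> length ts \<ge> 2 \<and> hd ts = last ts"
  then obtain ts where vp: "V_path (imm_face inc) Wf ts" and len: "length ts \<ge> 2" and hl: "hd ts = last ts" by blast
  have vp': "ts ! k \<noteq> ts ! Suc k \<and> (\<exists>\<nu>. (ts ! k, \<nu>) \<in> Wf \<and> imm_face inc (ts ! Suc k) \<nu>)" if "Suc k < length ts" for k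
    using vp that unfolding V_path_def by blast
  have ne: "ts \<noteq> []" using len by auto
  have hl': "ts ! (length ts - 1) = ts ! 0" using hl ne by (simp add: hd_conv_nth last_conv_nth)
  have good1: "good (ts ! k)" if "Suc k < length ts" for k using vp'[OF that] Wf_mem by blast
  have goodall: "good (ts ! k)" if "k < length ts" for k
  proof (cases "Suc k < length ts")
    case True then show ?thesis using good1 by simp
  next
    case False
    then have "k = length ts - 1" using that by simp
    then show ?thesis using hl' good1[of 0] len by simp
  qed
  have stp: "Rel (ts ! Suc k) (ts ! k)" if k: "Suc k < length ts" for k
  proof -
    obtain nu where nu: "(ts ! k, nu) \<in> Wf" "imm_face inc (ts ! Suc k) nu" "ts ! k \<noteq> ts ! Suc k" using vp'[OF k] by blast
    have "PR (ts ! k) = Some nu" using Wf_mem'[OF nu(1)] by simp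
    then show ?thesis using step[OF goodall[of k] _ nu(2) _ goodall[of "Suc k"]] nu(3) k by auto
  qed
  have chain: "Rel (ts ! Suc m) (ts ! 0)" if "Suc m < length ts" for m
    using that
  proof (induction m)
    case 0 then show ?case using stp by simp
  next
    case (Suc m)
    then have "Rel (ts ! Suc m) (ts ! 0)" by simp
    moreover have "Rel (ts ! Suc (Suc m)) (ts ! Suc m)" using stp Suc.prems by simp
    moreover have "Suc (Suc m) < length ts" "Suc m < length ts" "0 < length ts" using Suc.prems by auto
    ultimately show ?case using Rel_trans[OF goodall[of "Suc (Suc m)"] goodall[of "Suc m"] goodall[of 0]] by blast
  qed
  have e: "Suc (length ts - 2) = length ts - 1" "Suc (length ts - 2) < length ts" using len by auto
  have "Rel (ts ! (length ts - 1)) (ts ! 0)" using chain[OF e(2)] unfolding e(1) .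
  then show False using hl' Rel_irrefl by simp
qed

section \<open>Orbits\<close>

lemma act_id: "act a id = a" unfolding act_def by (simp add: map_nth)

lemma act_comp:
  assumes "length a = n" "s permutes {..<n}" "t permutes {..<n}"
  shows "act (act a s) t = act a (s \<circ> t)"
proof -
  have "act (act a s) t = permute_list t (permute_list s a)" unfolding act_def permute_list_def by simp
  also have "\<dots> = permute_list (s \<circ> t) a" using permute_list_compose[of t a s] assms by simp
  finally show ?thesis unfolding act_def permute_list_def .
qed

lemma orb_self: "a \<in> orbit n a"
proof -
  have "a = act a id" by (simp add: act_id)
  moreover have "id permutes {..<n}" by simp
  ultimately show ?thesis unfolding orbit_def by blast
qed

lemma orb_eq:
  assumes L: "length a = n" and x: "x \<in> orbit n a"
  shows "orbit n x = orbit n a"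
proof -
  obtain s where s: "s permutes {..<n}" "x = act a s" using x unfolding orbit_def by blast
  show ?thesis
  proof
    show "orbit n x \<subseteq> orbit n a"
    proof
      fix y assume "y \<in> orbit n x"
      then obtain t where t: "t permutes {..<n}" "y = act x t" unfolding orbit_def by blast
      then have "y = act a (s \<circ> t)" using act_comp[OF L s(1) t(1)] s by simp
      moreover have "s \<circ> t permutes {..<n}" using permutes_compose[OF t(1) s(1)] .
      ultimately show "y \<in> orbit n a" unfolding orbit_def by blast
    qed
    show "orbit n a \<subseteq> orbit n x"
    proof
      fix y assume "y \<in> orbit n a"
      then obtain t where t: "t permutes {..<n}" "y = act a t" unfolding orbit_def by blast
      have it: "inv s \<circ> t permutes {..<n}" using permutes_compose[OF t(1) permutes_inv[OF s(1)]] .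
      have "act x (inv s \<circ> t) = act a (s \<circ> (inv s \<circ> t))" using act_comp[OF L s(1) it] s by simp
      also have "s \<circ> (inv s \<circ> t) = t" using permutes_inv_o(1)[OF s(1)] by (simp add: o_assoc)
      finally have "y = act x (inv s \<circ> t)" using t by (simp add: comp_def)
      then show "y \<in> orbit n x" unfolding orbit_def using it by blast
    qed
  qed
qed

lemma orb_D: assumes "a \<in> D" "x \<in> orbit n a" shows "x \<in> D"
proof -
  obtain s where "s permutes {..<n}" "x = act a s" using assms(2) unfolding orbit_def by blast
  then show ?thesis using act_D assms(1) by simp
qed

lemma orb_cdim: assumes "a \<in> D" "x \<in> orbit n a" shows "cdim x = cdim a"
proof -
  obtain s where s: "s permutes {..<n}" "x = act a s" using assms(2) unfolding orbit_def by blast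
  then show ?thesis using cdim_act[OF s(1) D_len[OF assms(1)]] by simp
qed

lemma cverts_ne: "gcell_in V E c \<Longrightarrow> cverts inc c \<noteq> {}"
proof (cases c)
  case (Ed e)
  assume "gcell_in V E c"
  then have "card (inc e) = 2" using inc2 Ed by simp
  then show ?thesis using Ed by auto
qed simp

lemma D_nth_inj: "a \<in> D \<Longrightarrow> i < n \<Longrightarrow> j < n \<Longrightarrow> a ! i = a ! j \<Longrightarrow> i = j"
  using D_disj D_in cverts_ne by fastforce

lemma orbit_card: assumes aD: "a \<in> D" shows "card (orbit n a) = fact n"
proof -
  have L: "length a = n" using D_len aD by simp
  have o: "orbit n a = (\<lambda>s. act a s) ` {s. s permutes {..<n}}" unfolding orbit_def by blast
  have "inj_on (\<lambda>s. act a s) {s. s permutes {..<n}}"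
  proof (rule inj_onI)
    fix s t assume s: "s \<in> {s. s permutes {..<n}}" and t: "t \<in> {s. s permutes {..<n}}" and eq: "act a s = act a t"
    show "s = t"
    proof
      fix i show "s i = t i"
      proof (cases "i < n")
        case True
        have "act a s ! i = act a t ! i" using eq by simp
        then have "a ! s i = a ! t i" using act_nth'[of s a i] act_nth'[of t a i] s t L True by simp
        then show ?thesis using D_nth_inj[OF aD] perm_lt[of s i] perm_lt[of t i] s t True by simp
      next
        case False
        then show ?thesis using permutes_not_in[of s "{..<n}" i] permutes_not_in[of t "{..<n}" i] s t by simp
      qed
    qed
  qed
  then have "card (orbit n a) = card {s. s permutes {..<n}}" unfolding o by (rule card_image)
  also have "\<dots> = fact n" using card_permutations[of "{..<n}" n] by simp
  finally show ?thesis .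
qed

lemma fst_equiv: assumes "s permutes {..<n}" "b \<in> fst ` Wf" shows "act b s \<in> fst ` Wf"
proof -
  obtain c where "(b, c) \<in> Wf" using assms(2) by force
  then have "(act b s, act c s) \<in> Wf" using W_equiv assms(1) by simp
  then show ?thesis by force
qed
lemma snd_equiv: assumes "s permutes {..<n}" "b \<in> snd ` Wf" shows "act b s \<in> snd ` Wf"
proof -
  obtain c where "(c, b) \<in> Wf" using assms(2) by force
  then have "(act c s, act b s) \<in> Wf" using W_equiv assms(1) by simp
  then show ?thesis by force
qed

lemma fst_orb: assumes aD: "a \<in> D" and x: "x \<in> orbit n a"
  shows "x \<in> fst ` Wf \<longleftrightarrow> a \<in> fst ` Wf" "x \<in> snd ` Wf \<longleftrightarrow> a \<in> snd ` Wf"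
proof -
  obtain s where s: "s permutes {..<n}" "x = act a s" using x unfolding orbit_def by blast
  have L: "length a = n" using D_len aD by simp
  have bk: "act x (inv s) = a" using act_act_inv[OF s(1) L] s by simp
  show "x \<in> fst ` Wf \<longleftrightarrow> a \<in> fst ` Wf"
    using fst_equiv[OF s(1), of a] fst_equiv[OF permutes_inv[OF s(1)], of x] bk s by auto
  show "x \<in> snd ` Wf \<longleftrightarrow> a \<in> snd ` Wf"
    using snd_equiv[OF s(1), of a] snd_equiv[OF permutes_inv[OF s(1)], of x] bk s by auto
qed

lemma ind_fst: assumes aD: "a \<in> D"
  shows "orbit n a \<in> fst ` induced_field n Wf \<longleftrightarrow> a \<in> fst ` Wf"
proof
  assume "orbit n a \<in> fst ` induced_field n Wf"
  then obtain b c where bc: "(b, c) \<in> Wf" "orbit n a = orbit n b" unfolding induced_field_def by force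
  have "a \<in> orbit n b" using bc(2) orb_self by metis
  moreover have "b \<in> D" using Wf_mem' bc(1) by simp
  ultimately show "a \<in> fst ` Wf" using fst_orb bc(1) by force
next
  assume "a \<in> fst ` Wf"
  then obtain c where "(a, c) \<in> Wf" by force
  then show "orbit n a \<in> fst ` induced_field n Wf" unfolding induced_field_def by force
qed

lemma ind_snd: assumes aD: "a \<in> D"
  shows "orbit n a \<in> snd ` induced_field n Wf \<longleftrightarrow> a \<in> snd ` Wf"
proof
  assume "orbit n a \<in> snd ` induced_field n Wf"
  then obtain b c where bc: "(b, c) \<in> Wf" "orbit n a = orbit n c" unfolding induced_field_def by force
  have "a \<in> orbit n c" using bc(2) orb_self by metis
  moreover have "c \<in> D" using Wf_mem' bc(1) by simp
  ultimately show "a \<in> snd ` Wf" using fst_orb bc(1) by force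
next
  assume "a \<in> snd ` Wf"
  then obtain b where "(b, a) \<in> Wf" by force
  then show "orbit n a \<in> snd ` induced_field n Wf" unfolding induced_field_def by force
qed

lemma ind_crit: "a \<in> D \<Longrightarrow> critical (induced_field n Wf) (orbit n a) \<longleftrightarrow> critical Wf a"
  unfolding critical_def using ind_fst ind_snd by simp

lemma orb_act: "x \<in> orbit n a \<Longrightarrow> \<exists>s. s permutes {..<n} \<and> x = act a s"
  unfolding orbit_def by blast

lemma act_in_orb: "s permutes {..<n} \<Longrightarrow> act a s \<in> orbit n a"
  unfolding orbit_def by blast

lemma ind_dvf: "discrete_vector_field (UDnG n V E inc) (qface inc) (induced_field n Wf)"
  unfolding discrete_vector_field_def
proof (intro conjI ballI impI)
  show "case x of (Q1, Q2) \<Rightarrow> Q1 \<in> UDnG n V E inc \<and> Q2 \<in> UDnG n V E inc \<and> qface inc Q1 Q2"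
    if xi: "x \<in> induced_field n Wf" for x
  proof -
    obtain b a where ba: "x = (orbit n b, orbit n a)" "(b, a) \<in> Wf" using xi unfolding induced_field_def by blast
    have "b \<in> D" "a \<in> D" using Wf_mem'[OF ba(2)] by auto
    moreover have "qface inc (orbit n b) (orbit n a)" unfolding qface_def using orb_self W_face[OF ba(2)] by blast
    ultimately show ?thesis using ba(1) unfolding UDnG_def by auto
  qed
  fix p q assume pq: "p \<in> induced_field n Wf" "q \<in> induced_field n Wf" "p \<noteq> q"
  obtain b a where p: "p = (orbit n b, orbit n a)" and ba: "(b, a) \<in> Wf" using pq(1) unfolding induced_field_def by blast
  obtain b' a' where q: "q = (orbit n b', orbit n a')" and ba': "(b', a') \<in> Wf" using pq(2) unfolding induced_field_def by blast
  have W1: "good b" "PR b = Some a" "b \<in> D" "a \<in> D" using Wf_mem[of b a] Wf_mem'[OF ba] ba by auto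
  have W2: "good b'" "PR b' = Some a'" "b' \<in> D" "a' \<in> D" using Wf_mem[of b' a'] Wf_mem'[OF ba'] ba' by auto
  have L: "length a = n" "length b = n" "length a' = n" "length b' = n" using D_len W1 W2 by auto
  have c1: "orbit n b \<noteq> orbit n b'"
  proof
    assume e: "orbit n b = orbit n b'"
    then have "b' \<in> orbit n b" using orb_self by metis
    then obtain s where s: "s permutes {..<n}" "b' = act b s" using orb_act by blast
    have "(act b s, act a s) \<in> Wf" using W_equiv[OF ba s(1)] .
    then have "a' = act a s" using ba' s Wf_mem by simp
    then have "orbit n a' = orbit n a" using orb_eq[OF L(1) act_in_orb[OF s(1)]] by simp
    then show False using pq(3) p q e by simp
  qed
  have c2: "orbit n a \<noteq> orbit n a'"
  proof
    assume e: "orbit n a = orbit n a'"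
    then have "a' \<in> orbit n a" using orb_self by metis
    then obtain s where s: "s permutes {..<n}" "a' = act a s" using orb_act by blast
    have w: "(act b s, a') \<in> Wf" using W_equiv[OF ba s(1)] s by simp
    then have "good (act b s)" "PR (act b s) = Some a'" using Wf_mem'[OF w] Wf_mem[of "act b s" a'] by auto
    then have "act b s = b'" using matching W2 by simp
    then have "orbit n b' = orbit n b" using orb_eq[OF L(2) act_in_orb[OF s(1)]] by simp
    then show False using pq(3) p q e by simp
  qed
  have c3: "orbit n b \<noteq> orbit n a'"
  proof
    assume e: "orbit n b = orbit n a'"
    then have "b \<in> orbit n a'" using orb_self by metis
    then obtain s where s: "s permutes {..<n}" "b = act a' s" using orb_act by blast
    have w: "(act b' s, b) \<in> Wf" using W_equiv[OF ba' s(1)] s by simp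
    then have "coll b" using Wf_mem'[OF w] PR_coll by blast
    then show False using W1(1) unfolding good_def by simp
  qed
  have c4: "orbit n a \<noteq> orbit n b'"
  proof
    assume e: "orbit n a = orbit n b'"
    then have "b' \<in> orbit n a" using orb_self by metis
    then obtain s where s: "s permutes {..<n}" "b' = act a s" using orb_act by blast
    have w: "(act b s, b') \<in> Wf" using W_equiv[OF ba s(1)] s by simp
    then have "coll b'" using Wf_mem'[OF w] PR_coll by blast
    then show False using W2(1) unfolding good_def by simp
  qed
  show "{fst p, snd p} \<inter> {fst q, snd q} = {}" using c1 c2 c3 c4 p q by auto
qed

lemma finD: "finite D"
proof -
  let ?C = "Vx ` V \<union> Ed ` E"
  have "D \<subseteq> {xs. set xs \<subseteq> ?C \<and> length xs = n}"
  proof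
    fix a assume aD: "a \<in> D"
    have "set a \<subseteq> ?C"
    proof
      fix c assume "c \<in> set a"
      then obtain i where "i < length a" "a ! i = c" by (metis in_set_conv_nth)
      then have "gcell_in V E c" using D_in[OF aD] D_len[OF aD] by auto
      then show "c \<in> ?C" by (cases c) auto
    qed
    then show "a \<in> {xs. set xs \<subseteq> ?C \<and> length xs = n}" using D_len[OF aD] by simp
  qed
  moreover have "finite {xs. set xs \<subseteq> ?C \<and> length xs = n}"
    by (rule finite_lists_length_eq) (use finV finE in simp)
  ultimately show ?thesis by (rule finite_subset)
qed

lemma count_crit:
  "card {a \<in> D. cdim a = k \<and> critical Wf a}
     = fact n * card {Q \<in> UDnG n V E inc. (\<exists>a\<in>Q. cdim a = k) \<and> critical (induced_field n Wf) Q}"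
proof -
  let ?C = "{a \<in> D. cdim a = k \<and> critical Wf a}"
  let ?Q = "{Q \<in> UDnG n V E inc. (\<exists>a\<in>Q. cdim a = k) \<and> critical (induced_field n Wf) Q}"
  have U: "\<Union>?Q = ?C"
  proof
    show "\<Union>?Q \<subseteq> ?C"
    proof
      fix x assume "x \<in> \<Union>?Q"
      then obtain Q where Q: "Q \<in> ?Q" "x \<in> Q" by blast
      then obtain a where a: "a \<in> D" "Q = orbit n a" unfolding UDnG_def by auto
      have xD: "x \<in> D" using orb_D a Q by simp
      have ox: "orbit n x = Q" using orb_eq[OF D_len[OF a(1)]] a Q by simp
      obtain y where y: "y \<in> Q" "cdim y = k" using Q by auto
      have "cdim x = k" using orb_cdim[OF a(1)] a Q y by metis
      moreover have "critical Wf x" using ind_crit[OF xD] ox Q by simp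
      ultimately show "x \<in> ?C" using xD by simp
    qed
    show "?C \<subseteq> \<Union>?Q"
    proof
      fix x assume x: "x \<in> ?C"
      then have "orbit n x \<in> ?Q" using ind_crit[of x] orb_self[of x] unfolding UDnG_def by auto
      then show "x \<in> \<Union>?Q" using orb_self by blast
    qed
  qed
  have finQ: "finite ?Q" using finD unfolding UDnG_def by simp
  have finU: "finite (\<Union>?Q)" using U finD by simp
  have cardQ: "\<forall>c\<in>?Q. card c = fact n" using orbit_card unfolding UDnG_def by auto
  have disj: "\<forall>c1\<in>?Q. \<forall>c2\<in>?Q. c1 \<noteq> c2 \<longrightarrow> c1 \<inter> c2 = {}"
  proof (intro ballI impI)
    fix c1 c2 assume c: "c1 \<in> ?Q" "c2 \<in> ?Q" "c1 \<noteq> c2"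
    obtain a1 where a1: "a1 \<in> D" "c1 = orbit n a1" using c unfolding UDnG_def by auto
    obtain a2 where a2: "a2 \<in> D" "c2 = orbit n a2" using c unfolding UDnG_def by auto
    show "c1 \<inter> c2 = {}"
    proof (rule ccontr)
      assume "c1 \<inter> c2 \<noteq> {}"
      then obtain x where "x \<in> orbit n a1" "x \<in> orbit n a2" using a1 a2 by auto
      then have "orbit n a1 = orbit n a2" using orb_eq[OF D_len[OF a1(1)]] orb_eq[OF D_len[OF a2(1)]] by metis
      then show False using c a1 a2 by simp
    qed
  qed
  have "fact n * card ?Q = card (\<Union>?Q)"
    by (rule card_partition[OF finQ finU]) (use cardQ disj in blast)+
  then show ?thesis using U by simp
qed

end

theorem corollary3p5:
  fixes V :: "'v set" and E :: "'e set" and inc :: "'e \<Rightarrow> 'v set"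
    and T :: "'e set" and r :: 'v and num :: "'v \<Rightarrow> 'e \<Rightarrow> nat" and n :: nat
  assumes n1: "n \<ge> 1"
    and graph: "finite_graph V E inc"
    and subdiv: "sufficiently_subdivided n V E inc"
    and tree: "spanning_tree V E inc T"
    and root: "r \<in> V" "card {e \<in> T. r \<in> inc e} = 1"
    and numbering: "edge_numbering V E inc T r num"
  shows "gradient_vector_field (DnG n V E inc) (imm_face inc) (W n V E inc T r num)
    \<and> (\<forall>b a \<sigma>. (b, a) \<in> W n V E inc T r num \<and> \<sigma> permutes {..<n}
          \<longrightarrow> (act b \<sigma>, act a \<sigma>) \<in> W n V E inc T r num)
    \<and> discrete_vector_field (UDnG n V E inc) (qface inc) (induced_field n (W n V E inc T r num))
    \<and> (\<forall>k. card {a \<in> DnG n V E inc. cdim a = k \<and> critical (W n V E inc T r num) a}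
           = fact n * card {Q \<in> UDnG n V E inc. (\<exists>a\<in>Q. cdim a = k)
                \<and> critical (induced_field n (W n V E inc T r num)) Q})"
proof -
  interpret g: gsn V E inc T r num n
    by unfold_locales (use graph tree root numbering in auto)
  show ?thesis
  proof (intro conjI allI impI)
    show "gradient_vector_field (DnG n V E inc) (imm_face inc) (W n V E inc T r num)"
      unfolding gradient_vector_field_def using g.W_dvf g.W_acyclic by blast
    show "(act b \<sigma>, act a \<sigma>) \<in> W n V E inc T r num"
      if "(b, a) \<in> W n V E inc T r num \<and> \<sigma> permutes {..<n}" for b a \<sigma>
      using g.W_equiv that by blast
    show "discrete_vector_field (UDnG n V E inc) (qface inc) (induced_field n (W n V E inc T r num))"
      using g.ind_dvf .
    show "card {a \<in> DnG n V E inc. cdim a = k \<and> critical (W n V E inc T r num) a}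
           = fact n * card {Q \<in> UDnG n V E inc. (\<exists>a\<in>Q. cdim a = k)
                \<and> critical (induced_field n (W n V E inc T r num)) Q}" for k
      using g.count_crit .
  qed
qed

end
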